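(* Let $0<q\leq 1$, let $A\in\mathbb{R}^{m\times n}$, let $D\in\mathbb{R}^{n\times d}$ be a frame with frame bounds $0<\mathcal{L}\leq\mathcal{U}<\infty$, fix positive integers $s<a$, and set $\rho=s/a$, $\kappa=\mathcal{U}/\mathcal{L}$. Assume that the $(D^{\dagger},q)$-RIP constants of $A$ satisfy $$\rho^{1-q/2}\left(\rho^{2/q-1}+1\right)^{q/2}\kappa^q(1+\delta_a)<1-\delta_{s+a}.$$ Let $f\in\mathbb{R}^n$ and $y=Af$. Then any solution $\hat{f}$ of $$\min_{\tilde{f}\in\mathbb{R}^n}\|D^*\tilde{f}\|_q\quad\text{subject to}\quad A\tilde{f}=y$$ satisfies $$\|\hat{f}-f\|_2\leq C_1\frac{\|D^*f-(D^*f)_{[s]}\|_q}{s^{1/q-1/2}},$$ where $C_1$ is a positive constant depending only on $\delta_a$, $\delta_{s+a}$, $\rho$, $q$, $\mathcal{L}$ and $\kappa$.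
   Context: $D\in\mathbb{R}^{n\times d}$ is a frame with frame bounds $0<\mathcal{L}\leq\mathcal{U}<\infty$ if $\mathcal{L}\|f\|_2^2\leq\|D^*f\|_2^2\leq\mathcal{U}\|f\|_2^2$ for all $f\in\mathbb{R}^n$. $D^{\dagger}=(DD^* )^{-1}D$. For a matrix $E\in\mathbb{R}^{n\times d}$, $A$ obeys the $(E,q)$-RIP of order $k$ with constant $\delta\in[0,1)$ if $(1-\delta)\|Ev\|_2^q\leq\|AEv\|_q^q\leq(1+\delta)\|Ev\|_2^q$ for all $v\in\mathbb{R}^d$ with at most $k$ nonzero entries; $\delta_k$ denotes the smallest such $\delta$. $x_{[s]}$ keeps the $s$ largest entries of $x$ in magnitude and zeros the rest. *)

theory Defs
  imports "Jordan_Normal_Form.Gauss_Jordan_Elimination"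
begin

definition l2_norm :: "real vec \<Rightarrow> real" where
  "l2_norm v = sqrt (\<Sum>i<dim_vec v. (v $ i)^2)"

definition lq_norm :: "real \<Rightarrow> real vec \<Rightarrow> real" where
  "lq_norm q v = (\<Sum>i<dim_vec v. \<bar>v $ i\<bar> powr q) powr (1 / q)"

definition supp_card :: "real vec \<Rightarrow> nat" where
  "supp_card v = card {i. i < dim_vec v \<and> v $ i \<noteq> 0}"

definition is_frame :: "real mat \<Rightarrow> real \<Rightarrow> real \<Rightarrow> bool" where
  "is_frame D L U \<longleftrightarrow> 0 < L \<and> L \<le> U \<and>
     (\<forall>f \<in> carrier_vec (dim_row D).
        L * (l2_norm f)^2 \<le> (l2_norm (D\<^sup>T *\<^sub>v f))^2 \<and>
        (l2_norm (D\<^sup>T *\<^sub>v f))^2 \<le> U * (l2_norm f)^2)"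

definition dagger :: "real mat \<Rightarrow> real mat" where
  "dagger D = the (mat_inverse (D * D\<^sup>T)) * D"

definition has_rip :: "real mat \<Rightarrow> real \<Rightarrow> real mat \<Rightarrow> nat \<Rightarrow> real \<Rightarrow> bool" where
  "has_rip E q A k \<delta> \<longleftrightarrow> 0 \<le> \<delta> \<and> \<delta> < 1 \<and>
     (\<forall>v \<in> carrier_vec (dim_col E). supp_card v \<le> k \<longrightarrow>
        (1 - \<delta>) * (l2_norm (E *\<^sub>v v)) powr q \<le> (lq_norm q (A *\<^sub>v (E *\<^sub>v v))) powr q \<and>
        (lq_norm q (A *\<^sub>v (E *\<^sub>v v))) powr q \<le> (1 + \<delta>) * (l2_norm (E *\<^sub>v v)) powr q)"

definition rip_const :: "real mat \<Rightarrow> real \<Rightarrow> real mat \<Rightarrow> nat \<Rightarrow> real" where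
  "rip_const E q A k = Inf {\<delta>. has_rip E q A k \<delta>}"

definition is_best_s_term :: "real vec \<Rightarrow> nat \<Rightarrow> real vec \<Rightarrow> bool" where
  "is_best_s_term x s y \<longleftrightarrow> dim_vec y = dim_vec x \<and>
     (\<exists>T. T \<subseteq> {..<dim_vec x} \<and> card T = min s (dim_vec x) \<and>
          (\<forall>i\<in>T. \<forall>j<dim_vec x. j \<notin> T \<longrightarrow> \<bar>x $ j\<bar> \<le> \<bar>x $ i\<bar>) \<and>
          (\<forall>i<dim_vec x. y $ i = (if i \<in> T then x $ i else 0)))"

definition is_lq_minimizer :: "real \<Rightarrow> real mat \<Rightarrow> real mat \<Rightarrow> real vec \<Rightarrow> real vec \<Rightarrow> bool" where
  "is_lq_minimizer q A D y fhat \<longleftrightarrow> fhat \<in> carrier_vec (dim_col A) \<and> A *\<^sub>v fhat = y \<and>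
     (\<forall>g \<in> carrier_vec (dim_col A). A *\<^sub>v g = y \<longrightarrow>
        lq_norm q (D\<^sup>T *\<^sub>v fhat) \<le> lq_norm q (D\<^sup>T *\<^sub>v g))"

end

theory Submission
  imports Defs "HOL-Analysis.Convex" "Jordan_Normal_Form.Determinant"
begin


lemma powr_subadd:
  fixes a b p :: real
  assumes "0 \<le> a" "0 \<le> b" "0 < p" "p \<le> 1"
  shows "(a + b) powr p \<le> a powr p + b powr p"
proof (cases "a + b = 0")
  case True
  then have "a = 0" "b = 0" using assms by auto
  then show ?thesis by simp
next
  case False
  define s where "s = a + b"
  have s: "0 < s" using False assms s_def by auto
  have ha: "a / s \<le> (a / s) powr p"
    using powr_mono'[of p 1 "a/s"] assms s s_def by (auto simp: divide_le_eq_1)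
  have hb: "b / s \<le> (b / s) powr p"
    using powr_mono'[of p 1 "b/s"] assms s s_def by (auto simp: divide_le_eq_1)
  have "1 = a / s + b / s" using s s_def by (simp add: add_divide_distrib[symmetric])
  also have "\<dots> \<le> (a / s) powr p + (b / s) powr p" using ha hb by simp
  also have "\<dots> = (a powr p + b powr p) / s powr p"
    using assms s by (simp add: powr_divide add_divide_distrib)
  finally have "s powr p \<le> a powr p + b powr p"
    using s by (simp add: le_divide_eq)
  then show ?thesis by (simp add: s_def)
qed

lemma powr_subadd_sum:
  fixes g :: "'a \<Rightarrow> real" and p :: real
  assumes "finite I" "\<And>i. i \<in> I \<Longrightarrow> 0 \<le> g i" "0 < p" "p \<le> 1"
  shows "(\<Sum>i\<in>I. g i) powr p \<le> (\<Sum>i\<in>I. g i powr p)"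
  using assms
proof (induction I rule: finite_induct)
  case empty
  then show ?case by simp
next
  case (insert x F)
  have "(\<Sum>i\<in>insert x F. g i) powr p = (g x + (\<Sum>i\<in>F. g i)) powr p"
    using insert by simp
  also have "\<dots> \<le> g x powr p + (\<Sum>i\<in>F. g i) powr p"
    by (rule powr_subadd) (use insert in \<open>auto intro: sum_nonneg\<close>)
  also have "\<dots> \<le> g x powr p + (\<Sum>i\<in>F. g i powr p)"
    using insert by auto
  finally show ?case using insert by simp
qed

lemma powr_subadd_sum_abs:
  fixes f :: "'a \<Rightarrow> real" and p :: real
  assumes "finite I" "0 < p" "p \<le> 1"
  shows "\<bar>\<Sum>i\<in>I. f i\<bar> powr p \<le> (\<Sum>i\<in>I. \<bar>f i\<bar> powr p)"
proof -
  have "\<bar>\<Sum>i\<in>I. f i\<bar> powr p \<le> (\<Sum>i\<in>I. \<bar>f i\<bar>) powr p"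
    by (rule powr_mono2) (use assms in \<open>auto intro: sum_abs\<close>)
  also have "\<dots> \<le> (\<Sum>i\<in>I. \<bar>f i\<bar> powr p)"
    by (rule powr_subadd_sum) (use assms in auto)
  finally show ?thesis .
qed

lemma powr_mean:
  fixes g :: "'a \<Rightarrow> real" and p :: real
  assumes "finite T" "\<And>i. i \<in> T \<Longrightarrow> 0 \<le> g i" "0 < p" "p \<le> 1"
  shows "(\<Sum>i\<in>T. g i powr p) \<le> real (card T) powr (1 - p) * (\<Sum>i\<in>T. g i) powr p"
proof (cases "(\<Sum>i\<in>T. g i) = 0")
  case True
  then have "\<forall>i\<in>T. g i = 0" using sum_nonneg_eq_0_iff assms by blast
  then show ?thesis by simp
next
  case False
  then have Tne: "T \<noteq> {}" by auto
  then have cT: "0 < card T" using assms card_gt_0_iff by blast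
  have Spos: "0 < (\<Sum>i\<in>T. g i)" using False assms sum_nonneg by (metis order_le_less)
  define c where "c = (\<Sum>i\<in>T. g i) / real (card T)"
  have c: "0 < c" using Spos cT c_def by simp
  have each: "(g i / c) powr p \<le> p * (g i / c) + (1 - p)" if "i \<in> T" for i
  proof (cases "g i = 0")
    case True
    then show ?thesis using assms by simp
  next
    case False
    have "0 < g i" using assms(2)[OF that] False by simp
    then have "0 < g i / c" using c by simp
    then show ?thesis
      using Youngs_inequality_0[of p "1 - p" "g i / c" 1] assms by simp
  qed
  have "(\<Sum>i\<in>T. (g i / c) powr p) \<le> (\<Sum>i\<in>T. p * (g i / c) + (1 - p))"
    using each by (rule sum_mono)
  also have "\<dots> = p * ((\<Sum>i\<in>T. g i) / c) + (1 - p) * card T"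
    by (simp add: sum.distrib sum_distrib_left sum_divide_distrib)
  also have "\<dots> = card T"
  proof -
    have "(\<Sum>i\<in>T. g i) / c = card T" using cT Spos unfolding c_def by simp
    then show ?thesis by (simp add: algebra_simps)
  qed
  finally have h1: "(\<Sum>i\<in>T. g i powr p) / c powr p \<le> card T"
    using assms c by (simp add: powr_divide sum_divide_distrib)
  have "(\<Sum>i\<in>T. g i powr p) \<le> card T * c powr p"
    using h1 c by (simp add: divide_le_eq mult.commute)
  also have "\<dots> = real (card T) powr (1 - p) * (\<Sum>i\<in>T. g i) powr p"
    using cT Spos unfolding c_def
    by (simp add: powr_divide powr_diff field_simps)
  finally show ?thesis .
qed



lemma sq_as_powr:
  fixes y q :: real assumes "0 \<le> y" "0 < q"
  shows "y ^ 2 = (y powr q) powr (2 / q)"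
proof (cases "y = 0")
  case True then show ?thesis using assms by simp
next
  case False
  then have "0 < y" using assms by simp
  have "(y powr q) powr (2 / q) = y powr (q * (2 / q))" by (simp add: powr_powr)
  also have "q * (2 / q) = real 2" using assms by simp
  also have "y powr real 2 = y ^ 2" using \<open>0 < y\<close> by (rule powr_realpow)
  finally show ?thesis by simp
qed

lemma sum_shift_le:
  fixes f :: "nat \<Rightarrow> real"
  assumes "\<And>j. 0 \<le> f j"
  shows "(\<Sum>j\<in>{1..<J}. f (j - 1)) \<le> (\<Sum>j<J. f j)"
proof (cases J)
  case 0 then show ?thesis by simp
next
  case (Suc K)
  have "(\<Sum>j\<in>{1..<J}. f (j - 1)) = (\<Sum>j\<in>{Suc 0..<Suc K}. f (j - 1))" using Suc by simp
  also have "\<dots> = (\<Sum>j\<in>{0..<K}. f j)" by (simp only: sum.shift_bounds_Suc_ivl) simp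
  also have "\<dots> \<le> (\<Sum>j<J. f j)" using Suc assms by (intro sum_mono2) auto
  finally show ?thesis .
qed

lemma block_bound:
  fixes y :: "nat \<Rightarrow> real" and a J :: nat and q :: real
  assumes a: "0 < a" and q: "0 < q" "q \<le> 1" and y0: "\<And>k. 0 \<le> y k"
    and ymono: "\<And>k k'. k \<le> k' \<Longrightarrow> y k' \<le> y k"
  shows "(\<Sum>j\<in>{1..<J}. (\<Sum>k\<in>{j*a..<j*a+a}. (y k)^2) powr (q/2))
         \<le> real a powr (q/2 - 1) * (\<Sum>k<J*a. y k powr q)"
proof -
  define Q where "Q j = (\<Sum>k\<in>{j*a..<j*a+a}. y k powr q)" for j
  have Q0: "0 \<le> Q j" for j unfolding Q_def by (auto intro: sum_nonneg)
  have step: "(\<Sum>k\<in>{j*a..<j*a+a}. (y k)^2) powr (q/2) \<le> real a powr (q/2 - 1) * Q (j - 1)"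
    if j: "1 \<le> j" for j
  proof -
    define P where "P = Q (j - 1) / a"
    have P0: "0 \<le> P" using Q0 a unfolding P_def by simp
    have yk: "y k powr q \<le> P" if k: "k \<in> {j*a..<j*a+a}" for k
    proof -
      have "\<forall>k'\<in>{(j-1)*a..<(j-1)*a+a}. y k powr q \<le> y k' powr q"
      proof
        fix k' assume k': "k' \<in> {(j-1)*a..<(j-1)*a+a}"
        have "(j - 1) * a + a = j * a" using j by (cases j) auto
        then have "k' \<le> k" using k k' by auto
        then show "y k powr q \<le> y k' powr q"
          using ymono[OF \<open>k' \<le> k\<close>] y0 q by (intro powr_mono2) auto
      qed
      then have "(\<Sum>k'\<in>{(j-1)*a..<(j-1)*a+a}. y k powr q) \<le> Q (j - 1)"
        unfolding Q_def by (intro sum_mono) auto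
      then have "real a * y k powr q \<le> Q (j - 1)" by simp
      then show ?thesis unfolding P_def using a by (simp add: field_simps)
    qed
    have "(\<Sum>k\<in>{j*a..<j*a+a}. (y k)^2) \<le> (\<Sum>k\<in>{j*a..<j*a+a}. P powr (2/q))"
    proof (rule sum_mono)
      fix k assume k: "k \<in> {j*a..<j*a+a}"
      have "(y k)^2 = (y k powr q) powr (2/q)" using sq_as_powr y0 q by simp
      also have "\<dots> \<le> P powr (2/q)" using yk[OF k] q by (simp add: powr_mono2)
      finally show "(y k)^2 \<le> P powr (2/q)" .
    qed
    also have "\<dots> = real a * P powr (2/q)" by simp
    finally have h: "(\<Sum>k\<in>{j*a..<j*a+a}. (y k)^2) \<le> real a * P powr (2/q)" .
    have "(\<Sum>k\<in>{j*a..<j*a+a}. (y k)^2) powr (q/2) \<le> (real a * P powr (2/q)) powr (q/2)"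
      using h q by (intro powr_mono2) (auto intro: sum_nonneg)
    also have "\<dots> = real a powr (q/2) * P"
    proof -
      have "(P powr (2/q)) powr (q/2) = P"
        using q P0 by (simp add: powr_powr)
      then show ?thesis using P0 by (simp add: powr_mult)
    qed
    also have "\<dots> = real a powr (q/2 - 1) * Q (j - 1)"
    proof -
      have "real a powr (q/2 - 1) = real a powr (q/2) / real a" using a by (simp add: powr_diff)
      then show ?thesis unfolding P_def by simp
    qed
    finally show ?thesis .
  qed
  have "(\<Sum>j\<in>{1..<J}. (\<Sum>k\<in>{j*a..<j*a+a}. (y k)^2) powr (q/2))
        \<le> (\<Sum>j\<in>{1..<J}. real a powr (q/2 - 1) * Q (j - 1))"
    by (rule sum_mono) (use step in auto)
  also have "\<dots> = real a powr (q/2 - 1) * (\<Sum>j\<in>{1..<J}. Q (j - 1))"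
    by (simp add: sum_distrib_left)
  also have "\<dots> \<le> real a powr (q/2 - 1) * (\<Sum>j<J. Q j)"
    using sum_shift_le[of Q J] Q0 by (intro mult_left_mono) auto
  also have "(\<Sum>j<J. Q j) = (\<Sum>k<J*a. y k powr q)"
    unfolding Q_def using sum.nat_group[of "\<lambda>k. y k powr q" a J] by simp
  finally show ?thesis .
qed



lemma quad_bound:
  fixes u A B :: real
  assumes "0 \<le> u" "0 \<le> A" "0 \<le> B" "u^2 \<le> A * u + B"
  shows "u \<le> A + sqrt B"
proof (rule ccontr)
  assume "\<not> ?thesis"
  then have h: "A + sqrt B < u" by simp
  have sB: "0 \<le> sqrt B" using assms by simp
  have upos: "0 < u" using h sB assms by linarith
  have a1: "u * (A + sqrt B) < u * u" using h upos by (intro mult_strict_left_mono) auto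
  have a2: "sqrt B * sqrt B \<le> sqrt B * u" using h assms sB by (intro mult_left_mono) auto
  have a3: "sqrt B * sqrt B = B" using assms by simp
  have "u * u \<le> A * u + B" using assms by (simp add: power2_eq_square)
  then show False using a1 a2 a3 by (simp add: algebra_simps)
qed

lemma final_scalar:
  fixes \<theta> \<rho> q :: real
  assumes q: "0 < q" "q \<le> 1" and th: "0 < \<theta>" and rh: "0 < \<rho>"
    and gam: "\<theta> * \<rho> * (1 + \<rho> powr (2/q)) powr (q/2) < 1"
  shows "\<exists>C>0. \<forall>e r n \<tau>. 0 \<le> e \<longrightarrow> 0 \<le> r \<longrightarrow> 0 \<le> n \<longrightarrow> 0 \<le> \<tau> \<longrightarrow>
     e^2 \<le> \<theta> * (\<rho> * e + \<tau>) * n \<longrightarrow> r \<le> \<rho> * e + \<tau> \<longrightarrow>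
     n powr (2/q) \<le> e powr (2/q) + r powr (2/q) \<longrightarrow> n \<le> C * \<tau>"
proof -
  define p where "p = 2 / q"
  have p: "0 < p" using q p_def by simp
  define c2 where "c2 = (1 + \<rho> powr p) powr (q/2)"
  have "0 < 1 + \<rho> powr p" by (smt (verit) powr_ge_zero)
  then have c2: "0 < c2" unfolding c2_def by simp
  define g where "g = \<theta> * \<rho> * c2"
  have g: "0 < g" "g < 1" using gam th rh c2 unfolding g_def c2_def p_def by auto
  define m where "m = sqrt (sqrt g)"
  have m: "0 < m" "m < 1" using g unfolding m_def by auto
  define l where "l = 1 / m"
  have l: "1 < l" using m unfolding l_def by simp
  have l2g: "l^2 * g = sqrt g"
  proof -
    have "m^2 = sqrt g" unfolding m_def using g by simp
    then have "l^2 = 1 / sqrt g" unfolding l_def by (simp add: power_one_over)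
    moreover have "g / sqrt g = sqrt g" using g by (simp add: real_div_sqrt)
    ultimately show ?thesis by simp
  qed
  define t0 where "t0 = min (((l - 1) * \<theta> * \<rho>)^2 / \<theta>) ((l - 1) * \<theta> * \<rho>^2)"
  have t0: "0 < t0" unfolding t0_def using l th rh by auto
  show ?thesis
  proof (intro exI[of _ "1 / t0"] conjI allI impI)
    show "0 < 1 / t0" using t0 by simp
    fix e r n \<tau> :: real
    assume e0: "0 \<le> e" and r0: "0 \<le> r" and n0: "0 \<le> n" and tau0: "0 \<le> \<tau>"
      and h1: "e^2 \<le> \<theta> * (\<rho> * e + \<tau>) * n" and h2: "r \<le> \<rho> * e + \<tau>"
      and h3: "n powr (2/q) \<le> e powr (2/q) + r powr (2/q)"
    show "n \<le> 1 / t0 * \<tau>"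
    proof (rule ccontr)
      assume "\<not> n \<le> 1 / t0 * \<tau>"
      then have nbig: "\<tau> / t0 < n" by simp
      have npos: "0 < n" using nbig tau0 t0 by (smt (verit) divide_nonneg_pos)
      define t where "t = \<tau> / n"
      have t0t: "t < t0" unfolding t_def using nbig npos t0 by (simp add: field_simps)
      have tnn: "0 \<le> t" unfolding t_def using tau0 npos by simp
      define u where "u = e / n"
      have u0: "0 \<le> u" unfolding u_def using e0 npos by simp
      have hu: "u^2 \<le> (\<theta> * \<rho>) * u + \<theta> * t"
      proof -
        have "u^2 = e^2 / n^2" unfolding u_def by (simp add: power_divide)
        also have "\<dots> \<le> \<theta> * (\<rho> * e + \<tau>) * n / n^2"
          using h1 npos by (intro divide_right_mono) auto
        also have "\<dots> = (\<theta> * \<rho>) * u + \<theta> * t"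
          unfolding u_def t_def using npos by (simp add: field_simps power2_eq_square)
        finally show ?thesis .
      qed
      have "\<theta> * t \<le> ((l - 1) * \<theta> * \<rho>)^2"
      proof -
        have "\<theta> * t \<le> \<theta> * t0" using t0t th by simp
        also have "\<dots> \<le> \<theta> * (((l - 1) * \<theta> * \<rho>)^2 / \<theta>)"
          using th unfolding t0_def by (intro mult_left_mono) auto
        also have "\<dots> = ((l - 1) * \<theta> * \<rho>)^2" using th by simp
        finally show ?thesis .
      qed
      then have "sqrt (\<theta> * t) \<le> sqrt (((l - 1) * \<theta> * \<rho>)^2)"
        by (rule real_sqrt_le_mono)
      also have "\<dots> = (l - 1) * \<theta> * \<rho>" using l th rh by simp
      finally have sq: "sqrt (\<theta> * t) \<le> (l - 1) * \<theta> * \<rho>" .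
      have ub: "u \<le> l * \<theta> * \<rho>"
      proof -
        have "u \<le> \<theta> * \<rho> + sqrt (\<theta> * t)"
          using quad_bound[OF u0 _ _ hu] th rh tnn by simp
        then show ?thesis using sq by (simp add: algebra_simps)
      qed
      have tb: "t \<le> (l - 1) * \<theta> * \<rho>^2"
        using t0t unfolding t0_def by simp
      have rb: "r / n \<le> l^2 * \<theta> * \<rho>^2"
      proof -
        have "r / n \<le> \<rho> * u + t"
          using h2 npos unfolding u_def t_def by (simp add: field_simps)
        also have "\<dots> \<le> \<rho> * (l * \<theta> * \<rho>) + (l - 1) * \<theta> * \<rho>^2"
          using ub tb rh by (intro add_mono mult_left_mono) auto
        also have "\<dots> = (2 * l - 1) * \<theta> * \<rho>^2" by (simp add: algebra_simps power2_eq_square)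
        also have "\<dots> \<le> l^2 * \<theta> * \<rho>^2"
        proof -
          have "0 \<le> (l - 1) * (l - 1)" by simp
          then have "2 * l - 1 \<le> l^2" by (simp add: power2_eq_square algebra_simps)
          then show ?thesis using th rh by (intro mult_right_mono) auto
        qed
        finally show ?thesis .
      qed
      have one: "1 \<le> u powr p + (r / n) powr p"
      proof -
        have "n powr p \<le> e powr p + r powr p" using h3 p_def by simp
        then have "n powr p / n powr p \<le> (e powr p + r powr p) / n powr p"
          using npos by (intro divide_right_mono) auto
        then show ?thesis using npos e0 r0 unfolding u_def
          by (simp add: powr_divide add_divide_distrib)
      qed
      define K where "K = l^2 * \<theta> * \<rho>"
      have K0: "0 \<le> K" unfolding K_def using th rh by simp
      have "u powr p \<le> K powr p"
      proof -
        have tr: "0 < \<theta> * \<rho>" using th rh by simp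
        have "l * (\<theta> * \<rho>) \<le> (l * l) * (\<theta> * \<rho>)"
          using l tr by (intro mult_right_mono) auto
        then have "l * \<theta> * \<rho> \<le> K" unfolding K_def by (simp add: power2_eq_square algebra_simps)
        then show ?thesis using ub u0 p by (intro powr_mono2) auto
      qed
      moreover have "(r / n) powr p \<le> K powr p * \<rho> powr p"
      proof -
        have "(r / n) powr p \<le> (K * \<rho>) powr p"
          using rb r0 npos p unfolding K_def by (intro powr_mono2) (auto simp: power2_eq_square)
        then show ?thesis using K0 rh by (simp add: powr_mult)
      qed
      ultimately have "1 \<le> K powr p * (1 + \<rho> powr p)" using one by (simp add: algebra_simps)
      also have "K powr p * (1 + \<rho> powr p) = (K * c2) powr p"
      proof -
        have "c2 powr p = 1 + \<rho> powr p"
          unfolding c2_def p_def using q by (simp add: powr_powr)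
        then show ?thesis using K0 c2 by (simp add: powr_mult)
      qed
      also have "K * c2 = sqrt g" unfolding K_def g_def using l2g[unfolded g_def]
        by (simp add: algebra_simps)
      also have "(sqrt g) powr p < 1" using powr_less_mono2[OF p, of "sqrt g" 1] g by simp
      finally show False by simp
    qed
  qed
qed



definition restr :: "nat set \<Rightarrow> real vec \<Rightarrow> real vec" where
  "restr T x = vec (dim_vec x) (\<lambda>i. if i \<in> T then x $ i else 0)"

lemma restr_dim[simp]: "dim_vec (restr T x) = dim_vec x"
  unfolding restr_def by simp

lemma restr_carrier: "x \<in> carrier_vec d \<Longrightarrow> restr T x \<in> carrier_vec d"
  unfolding restr_def carrier_vec_def by simp

lemma restr_index[simp]: "i < dim_vec x \<Longrightarrow> restr T x $ i = (if i \<in> T then x $ i else 0)"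
  unfolding restr_def by simp

lemma sum_if_subset:
  fixes g :: "nat \<Rightarrow> real"
  assumes "T \<subseteq> {..<d}"
  shows "(\<Sum>k<d. if k \<in> T then g k else 0) = (\<Sum>k\<in>T. g k)"
proof -
  have "(\<Sum>k<d. if k \<in> T then g k else 0) = (\<Sum>k\<in>{..<d} \<inter> T. g k)"
    by (simp add: sum.inter_restrict[symmetric] if_distrib)
  also have "{..<d} \<inter> T = T" using assms by auto
  finally show ?thesis .
qed

lemma l2_sq: "(l2_norm v)^2 = v \<bullet> v"
proof -
  have "0 \<le> (\<Sum>i<dim_vec v. (v $ i)^2)" by (auto intro: sum_nonneg)
  then show ?thesis unfolding l2_norm_def scalar_prod_def
    by (simp add: atLeast0LessThan power2_eq_square)
qed

lemma l2_sq_sum: "(l2_norm v)^2 = (\<Sum>i<dim_vec v. (v $ i)^2)"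
proof -
  have "0 \<le> (\<Sum>i<dim_vec v. (v $ i)^2)" by (auto intro: sum_nonneg)
  then show ?thesis unfolding l2_norm_def by simp
qed

lemma l2_nonneg: "0 \<le> l2_norm v"
  unfolding l2_norm_def by (auto intro: sum_nonneg)

lemma CS_vec:
  assumes "dim_vec v = dim_vec w"
  shows "v \<bullet> w \<le> l2_norm v * l2_norm w"
proof -
  have "(v \<bullet> w)^2 \<le> (\<Sum>i<dim_vec w. (v $ i)^2) * (\<Sum>i<dim_vec w. (w $ i)^2)"
    unfolding scalar_prod_def atLeast0LessThan by (rule Cauchy_Schwarz_ineq_sum)
  also have "\<dots> = (l2_norm v * l2_norm w)^2"
    using assms by (simp add: l2_sq_sum power_mult_distrib)
  finally have "(v \<bullet> w)^2 \<le> (l2_norm v * l2_norm w)^2" .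
  then show ?thesis
    by (rule power2_le_imp_le[OF _ mult_nonneg_nonneg[OF l2_nonneg l2_nonneg]])
qed

lemma lq_pow:
  assumes "0 < q"
  shows "(lq_norm q v) powr q = (\<Sum>i<dim_vec v. \<bar>v $ i\<bar> powr q)"
proof -
  have "0 \<le> (\<Sum>i<dim_vec v. \<bar>v $ i\<bar> powr q)" by (auto intro: sum_nonneg)
  then show ?thesis unfolding lq_norm_def using assms by (simp add: powr_powr)
qed

lemma lq_nonneg: "0 \<le> lq_norm q v"
  unfolding lq_norm_def by simp

lemma mv_sum:
  assumes "A \<in> carrier_mat nr nc" "w \<in> carrier_vec nc" "i < nr"
  shows "(A *\<^sub>v w) $ i = (\<Sum>k<nc. A $$ (i, k) * w $ k)"
  using assms by (simp add: scalar_prod_def atLeast0LessThan row_def)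

lemma mv_restr:
  assumes "A \<in> carrier_mat nr nc" "x \<in> carrier_vec nc" "T \<subseteq> {..<nc}" "i < nr"
  shows "(A *\<^sub>v restr T x) $ i = (\<Sum>k\<in>T. A $$ (i, k) * x $ k)"
proof -
  have "(A *\<^sub>v restr T x) $ i = (\<Sum>k<nc. A $$ (i, k) * restr T x $ k)"
    using assms restr_carrier by (intro mv_sum) auto
  also have "\<dots> = (\<Sum>k<nc. if k \<in> T then A $$ (i, k) * x $ k else 0)"
    using assms by (intro sum.cong) auto
  also have "\<dots> = (\<Sum>k\<in>T. A $$ (i, k) * x $ k)" using assms(3) by (rule sum_if_subset)
  finally show ?thesis .
qed

lemma l2_restr_sq:
  assumes "T \<subseteq> {..<dim_vec x}"
  shows "(l2_norm (restr T x))^2 = (\<Sum>k\<in>T. (x $ k)^2)"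
proof -
  have "(l2_norm (restr T x))^2 = (\<Sum>k<dim_vec x. if k \<in> T then (x $ k)^2 else 0)"
    unfolding l2_sq_sum by (intro sum.cong) auto
  also have "\<dots> = (\<Sum>k\<in>T. (x $ k)^2)" using assms by (rule sum_if_subset)
  finally show ?thesis .
qed

lemma supp_restr:
  assumes "T \<subseteq> {..<dim_vec x}"
  shows "supp_card (restr T x) \<le> card T"
proof -
  have "{i. i < dim_vec (restr T x) \<and> restr T x $ i \<noteq> 0} \<subseteq> T"
  proof
    fix i assume "i \<in> {i. i < dim_vec (restr T x) \<and> restr T x $ i \<noteq> 0}"
    then have a: "i < dim_vec x" and b: "restr T x $ i \<noteq> 0" by (simp only: mem_Collect_eq restr_dim, blast)
    show "i \<in> T"
    proof (rule ccontr)
      assume "i \<notin> T"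
      then have "restr T x $ i = 0" using a by simp
      with b show False by simp
    qed
  qed
  moreover have "finite T" using assms finite_subset by blast
  ultimately show ?thesis unfolding supp_card_def by (rule card_mono[rotated])
qed



lemma vec_self_zero:
  fixes v :: "real vec"
  assumes "v \<in> carrier_vec n" "v \<bullet> v = 0"
  shows "v = 0\<^sub>v n"
proof -
  have "(\<Sum>i\<in>{0..<dim_vec v}. v $ i * v $ i) = 0" using assms unfolding scalar_prod_def by simp
  then have "\<forall>i\<in>{0..<dim_vec v}. v $ i * v $ i = 0"
    by (subst sum_nonneg_eq_0_iff[symmetric]) auto
  then show ?thesis using assms by (intro eq_vecI) auto
qed

lemma frame_lower:
  assumes "D \<in> carrier_mat n d" "is_frame D L U" "u \<in> carrier_vec n"
  shows "L * (l2_norm u)^2 \<le> (l2_norm (D\<^sup>T *\<^sub>v u))^2"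
  using assms unfolding is_frame_def by auto

lemma frame_upper:
  assumes "D \<in> carrier_mat n d" "is_frame D L U" "u \<in> carrier_vec n"
  shows "(l2_norm (D\<^sup>T *\<^sub>v u))^2 \<le> U * (l2_norm u)^2"
  using assms unfolding is_frame_def by auto

lemma adj:
  fixes D :: "real mat"
  assumes "D \<in> carrier_mat n d" "u \<in> carrier_vec n" "w \<in> carrier_vec d"
  shows "(D\<^sup>T *\<^sub>v u) \<bullet> w = u \<bullet> (D *\<^sub>v w)"
  using transpose_vec_mult_scalar[OF assms(1) assms(3) assms(2)] .

lemma frame_inv:
  fixes D :: "real mat"
  assumes D: "D \<in> carrier_mat n d" and fr: "is_frame D L U"
  shows "\<exists>B. mat_inverse (D * D\<^sup>T) = Some B \<and> D * D\<^sup>T * B = 1\<^sub>m n \<and> B * (D * D\<^sup>T) = 1\<^sub>m n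
     \<and> B \<in> carrier_mat n n"
proof -
  have G: "D * D\<^sup>T \<in> carrier_mat n n" using D by auto
  have L0: "0 < L" using fr unfolding is_frame_def by simp
  have dt: "det (D * D\<^sup>T) \<noteq> 0"
  proof
    assume "det (D * D\<^sup>T) = 0"
    then obtain v where v: "v \<in> carrier_vec n" "v \<noteq> 0\<^sub>v n" "(D * D\<^sup>T) *\<^sub>v v = 0\<^sub>v n"
      using det_0_iff_vec_prod_zero[OF G] by blast
    have Dv: "D\<^sup>T *\<^sub>v v \<in> carrier_vec d" using D v by auto
    have "(l2_norm (D\<^sup>T *\<^sub>v v))^2 = (D\<^sup>T *\<^sub>v v) \<bullet> (D\<^sup>T *\<^sub>v v)" by (rule l2_sq)
    also have "\<dots> = v \<bullet> (D *\<^sub>v (D\<^sup>T *\<^sub>v v))" using adj[OF D v(1) Dv] .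
    also have "D *\<^sub>v (D\<^sup>T *\<^sub>v v) = (D * D\<^sup>T) *\<^sub>v v" using D v by simp
    also have "v \<bullet> \<dots> = 0" using v by simp
    finally have "L * (l2_norm v)^2 \<le> 0" using frame_lower[OF D fr v(1)] by simp
    then have "(l2_norm v)^2 = 0" using L0
      by (metis mult_le_0_iff not_le zero_le_power2 order_antisym)
    then have "v \<bullet> v = 0" using l2_sq by metis
    then have "v = 0\<^sub>v n" using vec_self_zero v(1) by blast
    with v(2) show False by simp
  qed
  have "mat_inverse (D * D\<^sup>T) \<noteq> None"
  proof
    assume "mat_inverse (D * D\<^sup>T) = None"
    then have "D * D\<^sup>T \<notin> Units (ring_mat TYPE(real) n ())"
      by (rule mat_inverse(1)[OF G])
    moreover have "D * D\<^sup>T \<in> Units (ring_mat TYPE(real) n ())"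
      by (rule det_non_zero_imp_unit[OF G dt])
    ultimately show False by blast
  qed
  then obtain B where B: "mat_inverse (D * D\<^sup>T) = Some B" by blast
  show ?thesis using mat_inverse(2)[OF G B] B by blast
qed

lemma dagger_B:
  fixes D :: "real mat"
  assumes "mat_inverse (D * D\<^sup>T) = Some B"
  shows "dagger D = B * D"
  using assms unfolding dagger_def by simp

lemma dagger_bound:
  fixes D B :: "real mat"
  assumes D: "D \<in> carrier_mat n d" and fr: "is_frame D L U"
    and B: "D * D\<^sup>T * B = 1\<^sub>m n" "B \<in> carrier_mat n n" and w: "w \<in> carrier_vec d"
  shows "L * (l2_norm ((B * D) *\<^sub>v w))^2 \<le> (l2_norm w)^2"
proof -
  define u where "u = (B * D) *\<^sub>v w"
  have u: "u \<in> carrier_vec n" unfolding u_def using B D w by auto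
  have Du: "D\<^sup>T *\<^sub>v u \<in> carrier_vec d" using D u by auto
  have "(l2_norm (D\<^sup>T *\<^sub>v u))^2 = (D\<^sup>T *\<^sub>v u) \<bullet> (D\<^sup>T *\<^sub>v u)" by (rule l2_sq)
  also have "\<dots> = u \<bullet> (D *\<^sub>v (D\<^sup>T *\<^sub>v u))" using adj[OF D u Du] .
  also have "D *\<^sub>v (D\<^sup>T *\<^sub>v u) = D *\<^sub>v w"
  proof -
    have u2: "u = B *\<^sub>v (D *\<^sub>v w)" unfolding u_def using D B w by simp
    have Dw: "D *\<^sub>v w \<in> carrier_vec n" using D w by auto
    have "(D * D\<^sup>T * B) *\<^sub>v (D *\<^sub>v w) = (D * D\<^sup>T) *\<^sub>v (B *\<^sub>v (D *\<^sub>v w))"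
      using D B Dw by (intro assoc_mult_mat_vec) auto
    also have "\<dots> = D *\<^sub>v (D\<^sup>T *\<^sub>v (B *\<^sub>v (D *\<^sub>v w)))"
      using D B Dw by (intro assoc_mult_mat_vec) auto
    finally have "D *\<^sub>v (D\<^sup>T *\<^sub>v u) = (D * D\<^sup>T * B) *\<^sub>v (D *\<^sub>v w)" using u2 by simp
    also have "\<dots> = D *\<^sub>v w" using B Dw by simp
    finally show ?thesis .
  qed
  also have "u \<bullet> (D *\<^sub>v w) = (D\<^sup>T *\<^sub>v u) \<bullet> w" using adj[OF D u w] by simp
  also have "\<dots> \<le> l2_norm (D\<^sup>T *\<^sub>v u) * l2_norm w" using Du w D by (intro CS_vec) auto
  finally have h: "(l2_norm (D\<^sup>T *\<^sub>v u))^2 \<le> l2_norm (D\<^sup>T *\<^sub>v u) * l2_norm w" .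
  have h2: "l2_norm (D\<^sup>T *\<^sub>v u) \<le> l2_norm w"
  proof (cases "l2_norm (D\<^sup>T *\<^sub>v u) = 0")
    case True then show ?thesis using l2_nonneg[of w] by simp
  next
    case False
    then have "0 < l2_norm (D\<^sup>T *\<^sub>v u)" using l2_nonneg[of "D\<^sup>T *\<^sub>v u"] by simp
    then show ?thesis using h by (simp add: power2_eq_square)
  qed
  have "L * (l2_norm u)^2 \<le> (l2_norm (D\<^sup>T *\<^sub>v u))^2" by (rule frame_lower[OF D fr u])
  also have "\<dots> \<le> (l2_norm w)^2" using h2 l2_nonneg[of "D\<^sup>T *\<^sub>v u"] by (intro power_mono) auto
  finally show ?thesis unfolding u_def .
qed

lemma dagger_inner:
  fixes D B :: "real mat"
  assumes D: "D \<in> carrier_mat n d"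
    and B: "D * D\<^sup>T * B = 1\<^sub>m n" "B \<in> carrier_mat n n"
    and v: "v \<in> carrier_vec d" and h: "h \<in> carrier_vec n"
  shows "v \<bullet> (D\<^sup>T *\<^sub>v h) = (D\<^sup>T *\<^sub>v ((B * D) *\<^sub>v v)) \<bullet> (D\<^sup>T *\<^sub>v h)"
proof -
  define G where "G = D * D\<^sup>T"
  have G: "G \<in> carrier_mat n n" unfolding G_def using D by auto
  have GT: "G\<^sup>T = G" unfolding G_def using D by (simp add: transpose_mult[OF D])
  have BtG: "B\<^sup>T * G = 1\<^sub>m n"
  proof -
    have "(G * B)\<^sup>T = 1\<^sub>m n" using B unfolding G_def by simp
    then show ?thesis using transpose_mult[OF G B(2)] GT by simp
  qed
  define u where "u = (B * D) *\<^sub>v v"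
  have Dv: "D *\<^sub>v v \<in> carrier_vec n" using D v by auto
  have u: "u \<in> carrier_vec n" unfolding u_def using B D v by auto
  have Dh: "D\<^sup>T *\<^sub>v h \<in> carrier_vec d" using D h by auto
  have "(D\<^sup>T *\<^sub>v u) \<bullet> (D\<^sup>T *\<^sub>v h) = u \<bullet> (D *\<^sub>v (D\<^sup>T *\<^sub>v h))" using adj[OF D u Dh] .
  also have "\<dots> = (B *\<^sub>v (D *\<^sub>v v)) \<bullet> (G *\<^sub>v h)"
  proof -
    have "D *\<^sub>v (D\<^sup>T *\<^sub>v h) = G *\<^sub>v h" unfolding G_def using D h by simp
    moreover have "u = B *\<^sub>v (D *\<^sub>v v)" unfolding u_def using B D v by simp
    ultimately show ?thesis by simp
  qed
  also have "(B *\<^sub>v (D *\<^sub>v v)) \<bullet> (G *\<^sub>v h) = (D *\<^sub>v v) \<bullet> (B\<^sup>T *\<^sub>v (G *\<^sub>v h))"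
  proof -
    have BT: "B\<^sup>T \<in> carrier_mat n n" using B by auto
    have Gh: "G *\<^sub>v h \<in> carrier_vec n" using G h by auto
    have "((B\<^sup>T)\<^sup>T *\<^sub>v (D *\<^sub>v v)) \<bullet> (G *\<^sub>v h) = (D *\<^sub>v v) \<bullet> (B\<^sup>T *\<^sub>v (G *\<^sub>v h))"
      by (rule adj[OF BT Dv Gh])
    then show ?thesis by simp
  qed
  also have "B\<^sup>T *\<^sub>v (G *\<^sub>v h) = h" using BtG G h B
    by (metis assoc_mult_mat_vec one_mult_mat_vec transpose_carrier_mat)
  also have "(D *\<^sub>v v) \<bullet> h = v \<bullet> (D\<^sup>T *\<^sub>v h)"
  proof -
    have "(D\<^sup>T *\<^sub>v h) \<bullet> v = h \<bullet> (D *\<^sub>v v)" by (rule adj[OF D h v])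
    then show ?thesis using comm_scalar_prod[OF Dv h] comm_scalar_prod[OF v Dh] by simp
  qed
  finally show ?thesis unfolding u_def by simp
qed



lemma blk_iff:
  fixes a p j :: nat assumes a: "0 < a"
  shows "p \<in> {j*a..<j*a+a} \<longleftrightarrow> p div a = j"
proof
  assume "p \<in> {j*a..<j*a+a}"
  then have "a * j \<le> p" "p < a * Suc j" by (auto simp: algebra_simps)
  then show "p div a = j" by (rule div_nat_eqI)
next
  assume h: "p div a = j"
  have e: "p = j * a + p mod a" using div_mult_mod_eq[of p a] h by simp
  have "p mod a < a" using a by simp
  then show "p \<in> {j*a..<j*a+a}" using e unfolding atLeastLessThan_iff by linarith
qed

lemma blocks_exist:
  fixes x :: "real vec" and T0 :: "nat set" and a d :: nat
  assumes dx: "dim_vec x = d" and T0: "T0 \<subseteq> {..<d}" and a: "0 < a"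
  shows "\<exists>J B y. 0 < J \<and> (\<forall>j. B j \<subseteq> {..<d} - T0) \<and> (\<forall>j. card (B j) \<le> a) \<and> (\<forall>j. finite (B j))
    \<and> (\<forall>i j. i \<noteq> j \<longrightarrow> B i \<inter> B j = {}) \<and> (\<Union>j<J. B j) = {..<d} - T0
    \<and> (\<forall>k. 0 \<le> y k) \<and> (\<forall>k k'. k \<le> k' \<longrightarrow> y k' \<le> y k)
    \<and> (\<forall>j G. G 0 = 0 \<longrightarrow> (\<Sum>k\<in>B j. G \<bar>x $ k\<bar>) = (\<Sum>p\<in>{j*a..<j*a+a}. G (y p)))
    \<and> (\<forall>G. G 0 = 0 \<longrightarrow> (\<Sum>k\<in>{..<d} - T0. G \<bar>x $ k\<bar>) = (\<Sum>p<J*a. G (y p)))"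
proof -
  define R where "R = {..<d} - T0"
  have finR: "finite R" unfolding R_def by simp
  define key where "key i = - \<bar>x $ i\<bar>" for i
  define l where "l = sort_key key (sorted_list_of_set R)"
  have dl: "distinct l" unfolding l_def by simp
  have sl: "set l = R" unfolding l_def using finR by simp
  have sorted: "sorted (map key l)" unfolding l_def by simp
  define Nl where "Nl = length l"
  define B where "B j = (\<lambda>p. l ! p) ` ({j*a..<j*a+a} \<inter> {..<Nl})" for j
  define y where "y p = (if p < Nl then \<bar>x $ (l ! p)\<bar> else 0)" for p
  define J where "J = Nl div a + 1"
  have inj: "inj_on (\<lambda>p. l ! p) {..<Nl}" using dl unfolding Nl_def by (intro inj_on_nth) auto
  have NlJ: "Nl \<le> J * a"
  proof -
    have "Nl \<in> {(Nl div a)*a..<(Nl div a)*a+a}" using blk_iff[OF a, of Nl "Nl div a"] by blast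
    then show ?thesis unfolding J_def by (simp add: algebra_simps)
  qed
  have img: "(\<lambda>p. l ! p) ` {..<Nl} = R"
    using sl unfolding Nl_def by (auto simp: in_set_conv_nth)
  have BR: "B j \<subseteq> R" for j unfolding B_def using img by auto
  have cardB: "card (B j) \<le> a" for j
  proof -
    have "card (B j) \<le> card ({j*a..<j*a+a} \<inter> {..<Nl})" unfolding B_def by (rule card_image_le) simp
    also have "\<dots> \<le> card {j*a..<j*a+a}" by (rule card_mono) auto
    finally show ?thesis by simp
  qed
  have finB: "finite (B j)" for j unfolding B_def by simp
  have disj: "B i \<inter> B j = {}" if "i \<noteq> j" for i j
  proof (rule ccontr)
    assume "B i \<inter> B j \<noteq> {}"
    then obtain k where k: "k \<in> B i" "k \<in> B j" by blast
    from k(1) obtain p where p: "p \<in> {i*a..<i*a+a} \<inter> {..<Nl}" and kp: "k = l ! p"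
      unfolding B_def by blast
    from k(2) obtain p' where p': "p' \<in> {j*a..<j*a+a} \<inter> {..<Nl}" and kp': "k = l ! p'"
      unfolding B_def by blast
    have eq: "l ! p = l ! p'" using kp kp' by simp
    then have "p = p'" using inj p p' unfolding inj_on_def by blast
    then have "p div a = i" "p div a = j" using p p' blk_iff[OF a] by blast+
    then show False using that by simp
  qed
  have U: "(\<Union>j<J. B j) = R"
  proof
    show "(\<Union>j<J. B j) \<subseteq> R" using BR by auto
    show "R \<subseteq> (\<Union>j<J. B j)"
    proof
      fix k assume "k \<in> R"
      then obtain p where p: "p < Nl" "l ! p = k" using img by auto
      have "p < J * a" using p NlJ by simp
      then have "p div a < J" using a by (simp add: div_less_iff_less_mult)
      moreover have "p \<in> {(p div a)*a..<(p div a)*a+a}" using blk_iff[OF a, of p "p div a"] by blast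
      ultimately show "k \<in> (\<Union>j<J. B j)" unfolding B_def using p by blast
    qed
  qed
  have ymono: "y k' \<le> y k" if "k \<le> k'" for k k'
  proof (cases "k' < Nl")
    case True
    then have "map key l ! k \<le> map key l ! k'"
      using sorted_nth_mono[OF sorted that] unfolding Nl_def by simp
    then show ?thesis using True that unfolding y_def key_def Nl_def by simp
  next
    case False
    then show ?thesis unfolding y_def by simp
  qed
  have y0: "0 \<le> y k" for k unfolding y_def by simp
  have sumB: "(\<Sum>k\<in>B j. G \<bar>x $ k\<bar>) = (\<Sum>p\<in>{j*a..<j*a+a}. G (y p))" if G: "G 0 = 0" for j G
  proof -
    have "(\<Sum>k\<in>B j. G \<bar>x $ k\<bar>) = (\<Sum>p\<in>{j*a..<j*a+a} \<inter> {..<Nl}. G \<bar>x $ (l ! p)\<bar>)"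
      unfolding B_def by (rule sum.reindex_cong[of "\<lambda>p. l ! p"]) (use inj in \<open>auto intro: inj_on_subset\<close>)
    also have "\<dots> = (\<Sum>p\<in>{j*a..<j*a+a}. if p \<in> {..<Nl} then G \<bar>x $ (l ! p)\<bar> else 0)"
      by (rule sum.inter_restrict) simp
    also have "\<dots> = (\<Sum>p\<in>{j*a..<j*a+a}. G (y p))"
      unfolding y_def using G by (intro sum.cong) auto
    finally show ?thesis .
  qed
  have sumR: "(\<Sum>k\<in>R. G \<bar>x $ k\<bar>) = (\<Sum>p<J*a. G (y p))" if G: "G 0 = 0" for G
  proof -
    have "(\<Sum>k\<in>R. G \<bar>x $ k\<bar>) = (\<Sum>p\<in>{..<J*a} \<inter> {..<Nl}. G \<bar>x $ (l ! p)\<bar>)"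
    proof -
      have "{..<J*a} \<inter> {..<Nl} = {..<Nl}" using NlJ by auto
      then show ?thesis using img inj by (simp add: sum.reindex_cong[of "\<lambda>p. l ! p"])
    qed
    also have "\<dots> = (\<Sum>p<J*a. if p \<in> {..<Nl} then G \<bar>x $ (l ! p)\<bar> else 0)"
      by (rule sum.inter_restrict) simp
    also have "\<dots> = (\<Sum>p<J*a. G (y p))"
      unfolding y_def using G by (intro sum.cong) auto
    finally show ?thesis .
  qed
  show ?thesis
    apply (rule exI[of _ J], rule exI[of _ B], rule exI[of _ y])
    using BR cardB finB disj U ymono y0 sumB sumR unfolding R_def J_def by auto
qed



lemma rip_at_inf:
  assumes ex: "\<exists>\<delta>. has_rip E q A k \<delta>"
  shows "has_rip E q A k (rip_const E q A k)"
proof -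
  define S where "S = {\<delta>. has_rip E q A k \<delta>}"
  define c where "c = Inf S"
  have Sne: "S \<noteq> {}" using ex unfolding S_def by auto
  have bdd: "bdd_below S" unfolding S_def bdd_below_def has_rip_def by auto
  have c0: "0 \<le> c" unfolding c_def using Sne by (intro cInf_greatest) (auto simp: S_def has_rip_def)
  obtain d0 where d0: "d0 \<in> S" using Sne by auto
  have c1: "c < 1" using cInf_lower[OF d0 bdd] d0 unfolding c_def S_def has_rip_def by auto
  have approx: "\<exists>\<delta>\<in>S. \<delta> < c + e" if "0 < e" for e
    using cInf_less_iff[OF Sne bdd, of "c + e"] that unfolding c_def by auto
  have main: "(1 - c) * X \<le> Y \<and> Y \<le> (1 + c) * X"
    if vv: "\<And>\<delta>. \<delta> \<in> S \<Longrightarrow> (1 - \<delta>) * X \<le> Y \<and> Y \<le> (1 + \<delta>) * X" and X0: "0 \<le> X" for X Y :: real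
  proof
    show "(1 - c) * X \<le> Y"
    proof (rule field_le_epsilon)
      fix e :: real assume e: "0 < e"
      obtain \<delta> where \<delta>: "\<delta> \<in> S" "\<delta> < c + e / (X + 1)" using approx[of "e / (X + 1)"] e X0 by auto
      have a1: "(1 - c) * X = (1 - \<delta>) * X + (\<delta> - c) * X" by (simp add: algebra_simps)
      have a2: "(\<delta> - c) * X \<le> e / (X + 1) * X" using \<delta> X0 by (intro mult_right_mono) auto
      have a3: "e / (X + 1) * X \<le> e" using e X0 by (simp add: field_simps)
      show "(1 - c) * X \<le> Y + e" using vv[OF \<delta>(1)] a1 a2 a3 by linarith
    qed
    show "Y \<le> (1 + c) * X"
    proof (rule field_le_epsilon[of Y])
      fix e :: real assume e: "0 < e"
      obtain \<delta> where \<delta>: "\<delta> \<in> S" "\<delta> < c + e / (X + 1)" using approx[of "e / (X + 1)"] e X0 by auto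
      have a0: "Y \<le> (1 + \<delta>) * X" using vv[OF \<delta>(1)] by simp
      have a1: "(1 + \<delta>) * X = (1 + c) * X + (\<delta> - c) * X" by (simp add: algebra_simps)
      have a2: "(\<delta> - c) * X \<le> e / (X + 1) * X" using \<delta> X0 by (intro mult_right_mono) auto
      have a3: "e / (X + 1) * X \<le> e" using e X0 by (simp add: field_simps)
      show "Y \<le> (1 + c) * X + e" using a0 a1 a2 a3 by linarith
    qed
  qed
  have "\<forall>v \<in> carrier_vec (dim_col E). supp_card v \<le> k \<longrightarrow>
        (1 - c) * (l2_norm (E *\<^sub>v v)) powr q \<le> (lq_norm q (A *\<^sub>v (E *\<^sub>v v))) powr q \<and>
        (lq_norm q (A *\<^sub>v (E *\<^sub>v v))) powr q \<le> (1 + c) * (l2_norm (E *\<^sub>v v)) powr q"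
  proof (intro ballI impI)
    fix v assume v: "v \<in> carrier_vec (dim_col E)" "supp_card v \<le> k"
    show "(1 - c) * l2_norm (E *\<^sub>v v) powr q \<le> lq_norm q (A *\<^sub>v (E *\<^sub>v v)) powr q \<and>
          lq_norm q (A *\<^sub>v (E *\<^sub>v v)) powr q \<le> (1 + c) * l2_norm (E *\<^sub>v v) powr q"
      by (rule main) (use v in \<open>auto simp: S_def has_rip_def\<close>)
  qed
  then have "has_rip E q A k c" using c0 c1 unfolding has_rip_def by blast
  then show ?thesis unfolding rip_const_def c_def S_def .
qed



lemma powr_half_sq:
  fixes t q :: real assumes "0 \<le> t"
  shows "(t^2) powr (q/2) = t powr q"
proof (cases "t = 0")
  case True then show ?thesis by simp
next
  case False
  then have t: "0 < t" using assms by simp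
  have "t^2 = t powr (real 2)" using powr_realpow[OF t, of 2] by simp
  then have "(t^2) powr (q/2) = t powr (2 * (q/2))" by (simp add: powr_powr)
  then show ?thesis by simp
qed

lemma abs_powr_sq:
  fixes t q :: real
  shows "\<bar>t\<bar> powr q = (t^2) powr (q/2)"
  using powr_half_sq[of "\<bar>t\<bar>" q] by simp

lemma powr_q_2q:
  fixes t q :: real assumes "0 \<le> t" "0 < q"
  shows "(t powr q) powr (2/q) = t^2"
  using sq_as_powr[OF assms] by simp

lemma sq_powr_swap:
  fixes t q :: real assumes "0 \<le> t"
  shows "(t^2) powr q = (t powr q)^2"
proof (cases "t = 0")
  case True then show ?thesis by simp
next
  case False
  then have t: "0 < t" using assms by simp
  have "t^2 = t powr (real 2)" using powr_realpow[OF t, of 2] by simp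
  then have "(t^2) powr q = t powr (2 * q)" by (simp add: powr_powr)
  also have "\<dots> = (t powr q) powr (real 2)" by (simp add: powr_powr mult.commute)
  also have "\<dots> = (t powr q)^2" using t by (subst powr_realpow) auto
  finally show ?thesis .
qed

lemma sqrt_bound:
  fixes a b c :: real assumes "a^2 \<le> c * b^2" "0 \<le> b" "0 \<le> a"
  shows "a \<le> sqrt c * b"
proof -
  have "sqrt (a^2) \<le> sqrt (c * b^2)" using assms(1) by (rule real_sqrt_le_mono)
  then show ?thesis using assms by (simp add: real_sqrt_mult)
qed

lemma core:
  fixes A D :: "real mat" and f fhat fs :: "real vec"
  assumes A: "A \<in> carrier_mat m n" and D: "D \<in> carrier_mat n d" and fr: "is_frame D L U"
    and q: "0 < q" "q \<le> 1" and s: "0 < s" and sa: "s < a"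
    and ripa: "has_rip (dagger D) q A a \<delta>a" and ripsa: "has_rip (dagger D) q A (s + a) \<delta>sa"
    and f: "f \<in> carrier_vec n" and mn: "is_lq_minimizer q A D (A *\<^sub>v f) fhat"
    and bst: "is_best_s_term (D\<^sup>T *\<^sub>v f) s fs"
  defines "\<theta> \<equiv> (U / L) powr (q/2) * (1 + \<delta>a) / (1 - \<delta>sa)"
    and "\<rho>' \<equiv> (real s / real a) powr (1 - q/2)"
    and "\<tau> \<equiv> 2 * real a powr (q/2 - 1) * (lq_norm q (D\<^sup>T *\<^sub>v f - fs)) powr q"
    and "nn \<equiv> (l2_norm (D\<^sup>T *\<^sub>v (fhat - f))) powr q"
  shows "\<exists>e r. 0 \<le> e \<and> 0 \<le> r \<and> e^2 \<le> \<theta> * (\<rho>' * e + \<tau>) * nn \<and> r \<le> \<rho>' * e + \<tau>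
     \<and> nn powr (2/q) \<le> e powr (2/q) + r powr (2/q)"
proof -
  have a0: "0 < a" using s sa by simp
  have L0: "0 < L" and LU: "L \<le> U" using fr unfolding is_frame_def by auto
  have da: "0 \<le> \<delta>a" "\<delta>a < 1" using ripa unfolding has_rip_def by auto
  have dsa: "0 \<le> \<delta>sa" "\<delta>sa < 1" using ripsa unfolding has_rip_def by auto
  obtain B where B: "mat_inverse (D * D\<^sup>T) = Some B" "D * D\<^sup>T * B = 1\<^sub>m n" "B * (D * D\<^sup>T) = 1\<^sub>m n"
    "B \<in> carrier_mat n n" using frame_inv[OF D fr] by blast
  define Dg where "Dg = B * D"
  have dag: "dagger D = Dg" unfolding Dg_def using dagger_B[OF B(1)] .
  have Dg: "Dg \<in> carrier_mat n d" unfolding Dg_def using B D by auto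
  have fhat: "fhat \<in> carrier_vec n" and Afh: "A *\<^sub>v fhat = A *\<^sub>v f"
    and minq: "lq_norm q (D\<^sup>T *\<^sub>v fhat) \<le> lq_norm q (D\<^sup>T *\<^sub>v f)"
    using mn f A unfolding is_lq_minimizer_def by auto
  define h where "h = fhat - f"
  have h: "h \<in> carrier_vec n" unfolding h_def using fhat f by auto
  have Ah: "A *\<^sub>v h = 0\<^sub>v m"
  proof -
    have "A *\<^sub>v h = A *\<^sub>v fhat - A *\<^sub>v f" unfolding h_def using A fhat f by (rule mult_minus_distrib_mat_vec)
    also have "\<dots> = 0\<^sub>v m" using Afh A f by auto
    finally show ?thesis .
  qed
  define x where "x = D\<^sup>T *\<^sub>v h"
  define z where "z = D\<^sup>T *\<^sub>v f"
  have x: "x \<in> carrier_vec d" unfolding x_def using D h by auto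
  have z: "z \<in> carrier_vec d" unfolding z_def using D f by auto
  have dx: "dim_vec x = d" using x by auto
  have dz: "dim_vec z = d" using z by auto
  have Dfh: "D\<^sup>T *\<^sub>v fhat = z + x"
  proof -
    have "fhat = f + h" unfolding h_def using fhat f by auto
    then show ?thesis unfolding x_def z_def using D f h by (simp add: mult_add_distrib_mat_vec)
  qed
  have Dgx: "Dg *\<^sub>v x = h"
  proof -
    have "Dg *\<^sub>v x = B *\<^sub>v (D *\<^sub>v (D\<^sup>T *\<^sub>v h))" unfolding Dg_def x_def using B D h by simp
    also have "D *\<^sub>v (D\<^sup>T *\<^sub>v h) = (D * D\<^sup>T) *\<^sub>v h" using D h by simp
    also have "B *\<^sub>v ((D * D\<^sup>T) *\<^sub>v h) = (B * (D * D\<^sup>T)) *\<^sub>v h"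
      by (rule assoc_mult_mat_vec[symmetric]) (use B D h in auto)
    also have "\<dots> = h" using B h by simp
    finally show ?thesis .
  qed
  define M where "M = A * Dg"
  have M: "M \<in> carrier_mat m d" unfolding M_def using A Dg by auto
  have AM: "A *\<^sub>v (Dg *\<^sub>v w) = M *\<^sub>v w" if "w \<in> carrier_vec d" for w
    unfolding M_def using A Dg that by simp
  have Mx: "M *\<^sub>v x = 0\<^sub>v m" using AM[OF x] Dgx Ah by simp
  obtain T0 where T0: "T0 \<subseteq> {..<d}" "card T0 = min s d"
    and fsT: "\<And>i. i < d \<Longrightarrow> fs $ i = (if i \<in> T0 then z $ i else 0)" and dfs: "dim_vec fs = d"
    using bst dz unfolding is_best_s_term_def z_def by auto
  have cT0: "card T0 \<le> s" using T0 by simp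
  have finT0: "finite T0" using T0 finite_subset by blast
  obtain J Bk y where J: "0 < J" and BkC: "\<And>j. Bk j \<subseteq> {..<d} - T0" and cardB: "\<And>j. card (Bk j) \<le> a"
    and finB: "\<And>j. finite (Bk j)" and disj: "\<And>i j. i \<noteq> j \<Longrightarrow> Bk i \<inter> Bk j = {}"
    and UB: "(\<Union>j<J. Bk j) = {..<d} - T0" and y0: "\<And>k. 0 \<le> y k"
    and ymono: "\<And>k k'. k \<le> k' \<Longrightarrow> y k' \<le> y k"
    and sumB: "\<And>j (G :: real \<Rightarrow> real). G 0 = 0 \<Longrightarrow> (\<Sum>k\<in>Bk j. G \<bar>x $ k\<bar>) = (\<Sum>p\<in>{j*a..<j*a+a}. G (y p))"
    and sumC: "\<And>(G :: real \<Rightarrow> real). G 0 = 0 \<Longrightarrow> (\<Sum>k\<in>{..<d} - T0. G \<bar>x $ k\<bar>) = (\<Sum>p<J*a. G (y p))"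
    using blocks_exist[OF dx T0(1) a0] by metis
  define C where "C = {..<d} - T0"
  define T01 where "T01 = T0 \<union> Bk 0"
  define Rest where "Rest = (\<Union>j\<in>{1..<J}. Bk j)"
  have T01d: "T01 \<subseteq> {..<d}" unfolding T01_def using T0 BkC by auto
  have Restd: "Rest \<subseteq> {..<d}" unfolding Rest_def using BkC by auto
  have Bkd: "Bk j \<subseteq> {..<d}" for j using BkC by auto
  have finRest: "finite Rest" unfolding Rest_def using finB by auto
  have finT01: "finite T01" unfolding T01_def using finT0 finB by auto
  have C_split: "C = Bk 0 \<union> Rest" and C_disj: "Bk 0 \<inter> Rest = {}"
  proof -
    have "{..<J} = insert 0 {1..<J}" using J by auto
    then show "C = Bk 0 \<union> Rest" unfolding C_def Rest_def using UB[symmetric] by auto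
    show "Bk 0 \<inter> Rest = {}"
    proof (rule ccontr)
      assume "Bk 0 \<inter> Rest \<noteq> {}"
      then obtain k j where "k \<in> Bk 0" "k \<in> Bk j" "j \<in> {1..<J}" unfolding Rest_def by blast
      moreover have "Bk 0 \<inter> Bk j = {}" using disj \<open>j \<in> {1..<J}\<close> by auto
      ultimately show False by blast
    qed
  qed
  have all_split: "{..<d} = T01 \<union> Rest" and all_disj: "T01 \<inter> Rest = {}"
  proof -
    show "{..<d} = T01 \<union> Rest" unfolding T01_def using C_split T0(1) unfolding C_def by auto
    show "T01 \<inter> Rest = {}" unfolding T01_def using C_disj C_split unfolding C_def by auto
  qed
  have sum_all: "(\<Sum>k<d. g k) = (\<Sum>k\<in>T01. g k) + (\<Sum>k\<in>Rest. g k)" for g :: "nat \<Rightarrow> real"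
    using all_split all_disj finT01 finRest by (simp add: sum.union_disjoint)
  have sum_rest: "(\<Sum>k\<in>Rest. g k) = (\<Sum>j\<in>{1..<J}. \<Sum>k\<in>Bk j. g k)" for g :: "nat \<Rightarrow> real"
    unfolding Rest_def using finB disj by (intro sum.UNION_disjoint) auto
  have sum_T0C: "(\<Sum>k<d. g k) = (\<Sum>k\<in>T0. g k) + (\<Sum>k\<in>C. g k)" for g :: "nat \<Rightarrow> real"
    using sum.subset_diff[OF T0(1), of g] unfolding C_def by simp
  define v01 where "v01 = restr T01 x"
  define vr where "vr = restr Rest x"
  define vj where "vj j = restr (Bk j) x" for j
  have v01: "v01 \<in> carrier_vec d" unfolding v01_def using x by (rule restr_carrier)
  have vjc: "vj j \<in> carrier_vec d" for j unfolding vj_def using x by (rule restr_carrier)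
  have row: "(M *\<^sub>v v01) $ i = - (\<Sum>j\<in>{1..<J}. (M *\<^sub>v vj j) $ i)" if i: "i < m" for i
  proof -
    have "(M *\<^sub>v x) $ i = (\<Sum>k<d. M $$ (i, k) * x $ k)" using M x i by (rule mv_sum)
    also have "\<dots> = (\<Sum>k\<in>T01. M $$ (i, k) * x $ k) + (\<Sum>j\<in>{1..<J}. \<Sum>k\<in>Bk j. M $$ (i, k) * x $ k)"
      using sum_all sum_rest by simp
    also have "(\<Sum>k\<in>T01. M $$ (i, k) * x $ k) = (M *\<^sub>v v01) $ i"
      unfolding v01_def using mv_restr[OF M x T01d i] by simp
    also have "(\<Sum>j\<in>{1..<J}. \<Sum>k\<in>Bk j. M $$ (i, k) * x $ k) = (\<Sum>j\<in>{1..<J}. (M *\<^sub>v vj j) $ i)"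
      unfolding vj_def using mv_restr[OF M x Bkd i] by simp
    finally have "(M *\<^sub>v x) $ i = (M *\<^sub>v v01) $ i + (\<Sum>j\<in>{1..<J}. (M *\<^sub>v vj j) $ i)" .
    moreover have "(M *\<^sub>v x) $ i = 0" using Mx i by simp
    ultimately show ?thesis by linarith
  qed
  have lq01: "lq_norm q (M *\<^sub>v v01) powr q \<le> (\<Sum>j\<in>{1..<J}. lq_norm q (M *\<^sub>v vj j) powr q)"
  proof -
    have "lq_norm q (M *\<^sub>v v01) powr q = (\<Sum>i<m. \<bar>(M *\<^sub>v v01) $ i\<bar> powr q)"
      using lq_pow[OF q(1)] M by simp
    also have "\<dots> = (\<Sum>i<m. \<bar>\<Sum>j\<in>{1..<J}. (M *\<^sub>v vj j) $ i\<bar> powr q)"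
      using row by (intro sum.cong) auto
    also have "\<dots> \<le> (\<Sum>i<m. \<Sum>j\<in>{1..<J}. \<bar>(M *\<^sub>v vj j) $ i\<bar> powr q)"
      by (intro sum_mono powr_subadd_sum_abs) (use q in auto)
    also have "\<dots> = (\<Sum>j\<in>{1..<J}. \<Sum>i<m. \<bar>(M *\<^sub>v vj j) $ i\<bar> powr q)"
      by (rule sum.swap)
    also have "\<dots> = (\<Sum>j\<in>{1..<J}. lq_norm q (M *\<^sub>v vj j) powr q)"
      using lq_pow[OF q(1)] M by simp
    finally show ?thesis .
  qed
  have supp01: "supp_card v01 \<le> s + a"
  proof -
    have "supp_card v01 \<le> card T01" unfolding v01_def using T01d dx by (intro supp_restr) auto
    also have "\<dots> \<le> card T0 + card (Bk 0)" unfolding T01_def by (rule card_Un_le)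
    also have "\<dots> \<le> s + a" using cT0 cardB[of 0] by simp
    finally show ?thesis .
  qed
  define W where "W = l2_norm (Dg *\<^sub>v v01)"
  have low: "(1 - \<delta>sa) * W powr q \<le> lq_norm q (M *\<^sub>v v01) powr q"
    using ripsa v01 supp01 Dg AM[OF v01] unfolding has_rip_def dag W_def by auto
  have upj: "lq_norm q (M *\<^sub>v vj j) powr q \<le> (1 + \<delta>a) * l2_norm (Dg *\<^sub>v vj j) powr q" for j
  proof -
    have "supp_card (vj j) \<le> card (Bk j)" unfolding vj_def using Bkd dx by (intro supp_restr) auto
    then have "supp_card (vj j) \<le> a" using cardB[of j] by simp
    then show ?thesis using ripa vjc[of j] Dg AM[OF vjc[of j]] unfolding has_rip_def dag by auto
  qed
  have dgj: "l2_norm (Dg *\<^sub>v vj j) powr q \<le> l2_norm (vj j) powr q / L powr (q/2)" for j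
  proof -
    have "L * (l2_norm (Dg *\<^sub>v vj j))^2 \<le> (l2_norm (vj j))^2"
      unfolding Dg_def by (rule dagger_bound[OF D fr B(2) B(4) vjc])
    then have "(l2_norm (Dg *\<^sub>v vj j))^2 \<le> (l2_norm (vj j))^2 / L" using L0 by (simp add: field_simps)
    then have "((l2_norm (Dg *\<^sub>v vj j))^2) powr (q/2) \<le> ((l2_norm (vj j))^2 / L) powr (q/2)"
      using q by (intro powr_mono2) auto
    also have "\<dots> = ((l2_norm (vj j))^2) powr (q/2) / L powr (q/2)" using L0 by (simp add: powr_divide)
    finally show ?thesis using powr_half_sq[OF l2_nonneg] by metis
  qed
  define S where "S = (\<Sum>j\<in>{1..<J}. l2_norm (vj j) powr q)"
  have S0: "0 \<le> S" unfolding S_def by (auto intro: sum_nonneg)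
  have WS: "(1 - \<delta>sa) * W powr q \<le> (1 + \<delta>a) * S / L powr (q/2)"
  proof -
    have "(1 - \<delta>sa) * W powr q \<le> (\<Sum>j\<in>{1..<J}. lq_norm q (M *\<^sub>v vj j) powr q)"
      using low lq01 by linarith
    also have "\<dots> \<le> (\<Sum>j\<in>{1..<J}. (1 + \<delta>a) * (l2_norm (vj j) powr q / L powr (q/2)))"
    proof (rule sum_mono)
      fix j
      have "lq_norm q (M *\<^sub>v vj j) powr q \<le> (1 + \<delta>a) * l2_norm (Dg *\<^sub>v vj j) powr q" by (rule upj)
      also have "\<dots> \<le> (1 + \<delta>a) * (l2_norm (vj j) powr q / L powr (q/2))"
        using dgj da by (intro mult_left_mono) auto
      finally show "lq_norm q (M *\<^sub>v vj j) powr q \<le> (1 + \<delta>a) * (l2_norm (vj j) powr q / L powr (q/2))" .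
    qed
    also have "\<dots> = (1 + \<delta>a) * S / L powr (q/2)"
      unfolding S_def by (simp add: sum_distrib_left sum_divide_distrib)
    finally show ?thesis .
  qed
  have l2vj: "l2_norm (vj j) powr q = (\<Sum>p\<in>{j*a..<j*a+a}. (y p)^2) powr (q/2)" for j
  proof -
    have "(l2_norm (vj j))^2 = (\<Sum>k\<in>Bk j. (x $ k)^2)" unfolding vj_def using Bkd dx by (intro l2_restr_sq) auto
    also have "\<dots> = (\<Sum>k\<in>Bk j. \<bar>x $ k\<bar>^2)" by simp
    also have "\<dots> = (\<Sum>p\<in>{j*a..<j*a+a}. (y p)^2)" using sumB[of "\<lambda>t. t^2" j] by simp
    finally show ?thesis using powr_half_sq[OF l2_nonneg, of "vj j" q] by metis
  qed
  define Xc where "Xc = (\<Sum>k\<in>C. \<bar>x $ k\<bar> powr q)"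
  have SX: "S \<le> real a powr (q/2 - 1) * Xc"
  proof -
    have "S = (\<Sum>j\<in>{1..<J}. (\<Sum>k\<in>{j*a..<j*a+a}. (y k)^2) powr (q/2))"
      unfolding S_def using l2vj by simp
    also have "\<dots> \<le> real a powr (q/2 - 1) * (\<Sum>k<J*a. y k powr q)"
      by (rule block_bound[OF a0 q]) (use y0 ymono in auto)
    also have "(\<Sum>k<J*a. y k powr q) = Xc" unfolding Xc_def C_def using sumC[of "\<lambda>t. t powr q"] by simp
    finally show ?thesis .
  qed
  define R where "R = l2_norm vr"
  have R2: "R^2 = (\<Sum>j\<in>{1..<J}. (l2_norm (vj j))^2)"
  proof -
    have "R^2 = (\<Sum>k\<in>Rest. (x $ k)^2)" unfolding R_def vr_def using Restd dx by (intro l2_restr_sq) auto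
    also have "\<dots> = (\<Sum>j\<in>{1..<J}. \<Sum>k\<in>Bk j. (x $ k)^2)" by (rule sum_rest)
    also have "\<dots> = (\<Sum>j\<in>{1..<J}. (l2_norm (vj j))^2)"
      unfolding vj_def using Bkd dx by (intro sum.cong refl l2_restr_sq[symmetric]) auto
    finally show ?thesis .
  qed
  have RS: "R powr q \<le> S"
  proof -
    have "R powr q = (R^2) powr (q/2)" using powr_half_sq[of R q] R_def l2_nonneg by simp
    also have "\<dots> = (\<Sum>j\<in>{1..<J}. (l2_norm (vj j))^2) powr (q/2)" using R2 by simp
    also have "\<dots> \<le> (\<Sum>j\<in>{1..<J}. ((l2_norm (vj j))^2) powr (q/2))"
      by (rule powr_subadd_sum) (use q in auto)
    also have "\<dots> = S" unfolding S_def using powr_half_sq[OF l2_nonneg] by simp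
    finally show ?thesis .
  qed
  define E where "E = l2_norm v01"
  have E2: "E^2 = (\<Sum>k\<in>T01. (x $ k)^2)" unfolding E_def v01_def using T01d dx by (intro l2_restr_sq) auto
  define X0 where "X0 = (\<Sum>k\<in>T0. \<bar>x $ k\<bar> powr q)"
  have X0E: "X0 \<le> real s powr (1 - q/2) * E powr q"
  proof -
    have "X0 = (\<Sum>k\<in>T0. ((x $ k)^2) powr (q/2))" unfolding X0_def using abs_powr_sq by simp
    also have "\<dots> \<le> real (card T0) powr (1 - q/2) * (\<Sum>k\<in>T0. (x $ k)^2) powr (q/2)"
      by (rule powr_mean) (use finT0 q in auto)
    also have "\<dots> \<le> real s powr (1 - q/2) * (\<Sum>k\<in>T01. (x $ k)^2) powr (q/2)"
    proof (rule mult_mono)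
      show "real (card T0) powr (1 - q/2) \<le> real s powr (1 - q/2)" using cT0 q by (intro powr_mono2) auto
      show "(\<Sum>k\<in>T0. (x $ k)^2) powr (q/2) \<le> (\<Sum>k\<in>T01. (x $ k)^2) powr (q/2)"
        using q finT01 unfolding T01_def by (intro powr_mono2 sum_mono2) (auto intro: sum_nonneg)
    qed auto
    also have "(\<Sum>k\<in>T01. (x $ k)^2) powr (q/2) = E powr q"
      using E2 powr_half_sq[of E q] E_def l2_nonneg by simp
    finally show ?thesis .
  qed
  define \<sigma>q where "\<sigma>q = (\<Sum>k\<in>C. \<bar>z $ k\<bar> powr q)"
  have XcX0: "Xc \<le> X0 + 2 * \<sigma>q"
  proof -
    have "lq_norm q (z + x) powr q \<le> lq_norm q z powr q"
      using minq Dfh q unfolding z_def by (intro powr_mono2) (auto simp: lq_nonneg)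
    then have m1: "(\<Sum>k<d. \<bar>z $ k + x $ k\<bar> powr q) \<le> (\<Sum>k<d. \<bar>z $ k\<bar> powr q)"
      using lq_pow[OF q(1)] dx dz by simp
    have p1: "\<bar>x $ k\<bar> powr q \<le> \<bar>z $ k + x $ k\<bar> powr q + \<bar>z $ k\<bar> powr q" for k
    proof -
      have "\<bar>x $ k\<bar> powr q \<le> (\<bar>z $ k + x $ k\<bar> + \<bar>z $ k\<bar>) powr q" using q by (intro powr_mono2) auto
      also have "\<dots> \<le> \<bar>z $ k + x $ k\<bar> powr q + \<bar>z $ k\<bar> powr q" by (rule powr_subadd) (use q in auto)
      finally show ?thesis .
    qed
    have p2: "\<bar>z $ k\<bar> powr q \<le> \<bar>z $ k + x $ k\<bar> powr q + \<bar>x $ k\<bar> powr q" for k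
    proof -
      have "\<bar>z $ k\<bar> powr q \<le> (\<bar>z $ k + x $ k\<bar> + \<bar>x $ k\<bar>) powr q" using q by (intro powr_mono2) auto
      also have "\<dots> \<le> \<bar>z $ k + x $ k\<bar> powr q + \<bar>x $ k\<bar> powr q" by (rule powr_subadd) (use q in auto)
      finally show ?thesis .
    qed
    have s1: "Xc \<le> (\<Sum>k\<in>C. \<bar>z $ k + x $ k\<bar> powr q) + \<sigma>q"
      unfolding Xc_def \<sigma>q_def using p1 by (simp add: sum.distrib[symmetric] sum_mono)
    have s2: "(\<Sum>k\<in>T0. \<bar>z $ k\<bar> powr q) \<le> (\<Sum>k\<in>T0. \<bar>z $ k + x $ k\<bar> powr q) + X0"
      unfolding X0_def using p2 by (simp add: sum.distrib[symmetric] sum_mono)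
    have s3: "(\<Sum>k\<in>T0. \<bar>z $ k + x $ k\<bar> powr q) + (\<Sum>k\<in>C. \<bar>z $ k + x $ k\<bar> powr q)
              \<le> (\<Sum>k\<in>T0. \<bar>z $ k\<bar> powr q) + \<sigma>q"
      using m1 sum_T0C[of "\<lambda>k. \<bar>z $ k + x $ k\<bar> powr q"] sum_T0C[of "\<lambda>k. \<bar>z $ k\<bar> powr q"]
      unfolding \<sigma>q_def by linarith
    show ?thesis using s1 s2 s3 by linarith
  qed
  have \<sigma>q_eq: "lq_norm q (D\<^sup>T *\<^sub>v f - fs) powr q = \<sigma>q"
  proof -
    have "lq_norm q (D\<^sup>T *\<^sub>v f - fs) powr q = (\<Sum>k<d. \<bar>(z - fs) $ k\<bar> powr q)"
      using lq_pow[OF q(1)] dz dfs unfolding z_def by simp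
    also have "\<dots> = (\<Sum>k<d. if k \<in> T0 then 0 else \<bar>z $ k\<bar> powr q)"
      using fsT dz dfs by (intro sum.cong) auto
    also have "\<dots> = \<sigma>q" using sum_T0C[of "\<lambda>k. if k \<in> T0 then 0 else \<bar>z $ k\<bar> powr q"]
      unfolding \<sigma>q_def C_def by simp
    finally show ?thesis .
  qed
  have coef: "real a powr (q/2 - 1) * real s powr (1 - q/2) = \<rho>'"
  proof -
    have "real a powr (q/2 - 1) = 1 / real a powr (1 - q/2)"
      using a0 by (simp add: powr_minus_divide[symmetric])
    then show ?thesis unfolding \<rho>'_def using a0 s by (simp add: powr_divide)
  qed
  have S_bound: "S \<le> \<rho>' * E powr q + \<tau>"
  proof -
    have ap: "0 \<le> real a powr (q/2 - 1)" by simp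
    have "S \<le> real a powr (q/2 - 1) * (real s powr (1 - q/2) * E powr q + 2 * \<sigma>q)"
    proof -
      have "Xc \<le> real s powr (1 - q/2) * E powr q + 2 * \<sigma>q" using XcX0 X0E by linarith
      then have "real a powr (q/2 - 1) * Xc \<le> real a powr (q/2 - 1) * (real s powr (1 - q/2) * E powr q + 2 * \<sigma>q)"
        using ap by (rule mult_left_mono)
      then show ?thesis using SX by linarith
    qed
    also have "\<dots> = \<rho>' * E powr q + \<tau>"
      unfolding \<tau>_def \<sigma>q_eq using coef by (simp add: algebra_simps)
    finally show ?thesis .
  qed
  define N where "N = l2_norm x"
  have nnN: "nn = N powr q" unfolding nn_def N_def x_def h_def ..
  have N2: "N^2 = E^2 + R^2"
  proof -
    have "N^2 = (\<Sum>k<d. (x $ k)^2)" unfolding N_def using l2_sq_sum dx by simp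
    also have "\<dots> = (\<Sum>k\<in>T01. (x $ k)^2) + (\<Sum>k\<in>Rest. (x $ k)^2)" by (rule sum_all)
    also have "(\<Sum>k\<in>Rest. (x $ k)^2) = R^2" unfolding R_def vr_def using Restd dx
      by (intro l2_restr_sq[symmetric]) auto
    finally show ?thesis using E2 by simp
  qed
  have EWN: "E^2 \<le> sqrt U * W * N"
  proof -
    have "E^2 = v01 \<bullet> x"
    proof -
      have "v01 \<bullet> x = (\<Sum>k<d. v01 $ k * x $ k)" unfolding scalar_prod_def using dx by (simp add: atLeast0LessThan)
      also have "\<dots> = (\<Sum>k<d. if k \<in> T01 then (x $ k)^2 else 0)"
        unfolding v01_def using dx by (intro sum.cong) (auto simp: power2_eq_square)
      also have "\<dots> = (\<Sum>k\<in>T01. (x $ k)^2)" using T01d by (rule sum_if_subset)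
      finally show ?thesis using E2 by simp
    qed
    also have "\<dots> = (D\<^sup>T *\<^sub>v (Dg *\<^sub>v v01)) \<bullet> x"
      unfolding x_def Dg_def by (rule dagger_inner[OF D B(2) B(4) v01 h])
    also have "\<dots> \<le> l2_norm (D\<^sup>T *\<^sub>v (Dg *\<^sub>v v01)) * N"
      unfolding N_def using D Dg v01 dx by (intro CS_vec) auto
    also have "l2_norm (D\<^sup>T *\<^sub>v (Dg *\<^sub>v v01)) \<le> sqrt U * W"
    proof -
      have u: "Dg *\<^sub>v v01 \<in> carrier_vec n" using Dg v01 by auto
      show ?thesis unfolding W_def
        by (rule sqrt_bound[OF frame_upper[OF D fr u] l2_nonneg l2_nonneg])
    qed
    then have "l2_norm (D\<^sup>T *\<^sub>v (Dg *\<^sub>v v01)) * N \<le> sqrt U * W * N"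
      unfolding N_def using l2_nonneg by (intro mult_right_mono) auto
    finally show ?thesis .
  qed
  define e where "e = E powr q"
  define r where "r = R powr q"
  have E0: "0 \<le> E" unfolding E_def by (rule l2_nonneg)
  have R0: "0 \<le> R" unfolding R_def by (rule l2_nonneg)
  have N0: "0 \<le> N" unfolding N_def by (rule l2_nonneg)
  have W0: "0 \<le> W" unfolding W_def by (rule l2_nonneg)
  have U0: "0 < U" using L0 LU by simp
  have main: "e^2 \<le> \<theta> * (\<rho>' * e + \<tau>) * nn"
  proof -
    have "e^2 = (E^2) powr q" unfolding e_def using sq_powr_swap[OF E0] by simp
    also have "\<dots> \<le> (sqrt U * W * N) powr q" using EWN q by (intro powr_mono2) auto
    also have "\<dots> = U powr (q/2) * W powr q * nn"
    proof -
      have "sqrt U powr q = ((sqrt U)^2) powr (q/2)" using powr_half_sq[of "sqrt U" q] U0 by simp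
      also have "(sqrt U)^2 = U" using U0 by simp
      finally have "sqrt U powr q = U powr (q/2)" .
      then show ?thesis unfolding nnN using U0 W0 N0 by (simp add: powr_mult)
    qed
    also have "U powr (q/2) * W powr q \<le> \<theta> * (\<rho>' * e + \<tau>)"
    proof -
      have dd: "0 < 1 - \<delta>sa" using dsa by simp
      have "W powr q \<le> (1 + \<delta>a) * S / L powr (q/2) / (1 - \<delta>sa)"
        using pos_le_divide_eq[OF dd] WS by (metis mult.commute)
      then have "U powr (q/2) * W powr q \<le> U powr (q/2) * ((1 + \<delta>a) * S / L powr (q/2) / (1 - \<delta>sa))"
        by (intro mult_left_mono) auto
      also have "\<dots> = \<theta> * S"
        unfolding \<theta>_def using L0 U0 by (simp add: powr_divide field_simps)
      also have "\<dots> \<le> \<theta> * (\<rho>' * e + \<tau>)"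
      proof (rule mult_left_mono)
        show "S \<le> \<rho>' * e + \<tau>" using S_bound unfolding e_def .
        show "0 \<le> \<theta>" unfolding \<theta>_def using da dd by simp
      qed
      finally show ?thesis .
    qed
    then have "U powr (q/2) * W powr q * nn \<le> \<theta> * (\<rho>' * e + \<tau>) * nn"
      unfolding nnN by (intro mult_right_mono) auto
    finally show ?thesis .
  qed
  show ?thesis
  proof (intro exI conjI)
    show "0 \<le> e" unfolding e_def by simp
    show "0 \<le> r" unfolding r_def by simp
    show "e^2 \<le> \<theta> * (\<rho>' * e + \<tau>) * nn" by (rule main)
    show "r \<le> \<rho>' * e + \<tau>" unfolding r_def e_def using RS S_bound by simp
    show "nn powr (2/q) \<le> e powr (2/q) + r powr (2/q)"
      unfolding nnN e_def r_def using powr_q_2q[OF N0 q(1)] powr_q_2q[OF E0 q(1)] powr_q_2q[OF R0 q(1)] N2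
      by simp
  qed
qed



lemma a_powr_eq:
  fixes a s \<rho> t :: real assumes "0 < a" "0 < s" "\<rho> = s / a"
  shows "a powr t * s powr (- t) = \<rho> powr (- t)"
  using assms by (simp add: powr_def exp_add[symmetric] ln_div algebra_simps)

theorem corollary2p2:
  shows "\<exists>C1 :: real \<Rightarrow> real \<Rightarrow> real \<Rightarrow> real \<Rightarrow> real \<Rightarrow> real \<Rightarrow> real.
    (\<forall>x1 x2 x3 x4 x5 x6. 0 < C1 x1 x2 x3 x4 x5 x6) \<and>
    (\<forall>(m::nat) (n::nat) (d::nat) (A::real mat) (D::real mat) (L::real) (U::real)
        (q::real) (s::nat) (a::nat) (f::real vec) (fhat::real vec) (fs::real vec).
      A \<in> carrier_mat m n \<longrightarrow> D \<in> carrier_mat n d \<longrightarrow>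
      is_frame D L U \<longrightarrow>
      0 < q \<longrightarrow> q \<le> 1 \<longrightarrow> 0 < s \<longrightarrow> s < a \<longrightarrow>
      (\<exists>\<delta>. has_rip (dagger D) q A a \<delta>) \<longrightarrow>
      (\<exists>\<delta>. has_rip (dagger D) q A (s + a) \<delta>) \<longrightarrow>
      (let \<rho> = real s / real a; \<kappa> = U / L;
           \<delta>a = rip_const (dagger D) q A a; \<delta>sa = rip_const (dagger D) q A (s + a)
       in \<rho> powr (1 - q / 2) * (\<rho> powr (2 / q - 1) + 1) powr (q / 2) * \<kappa> powr q * (1 + \<delta>a)
            < 1 - \<delta>sa \<longrightarrow>
          f \<in> carrier_vec n \<longrightarrow>
          is_lq_minimizer q A D (A *\<^sub>v f) fhat \<longrightarrow>
          is_best_s_term (D\<^sup>T *\<^sub>v f) s fs \<longrightarrow>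
          l2_norm (fhat - f) \<le> C1 \<delta>a \<delta>sa \<rho> q L \<kappa> *
            lq_norm q (D\<^sup>T *\<^sub>v f - fs) / real s powr (1 / q - 1 / 2)))"
proof -
  define P where "P \<delta>a \<delta>sa \<rho> q \<kappa> C \<longleftrightarrow> 0 < C \<and> (\<forall>e r n \<tau>. 0 \<le> e \<longrightarrow> 0 \<le> r \<longrightarrow> 0 \<le> n \<longrightarrow> 0 \<le> \<tau> \<longrightarrow>
     e^2 \<le> (\<kappa> powr (q/2) * (1 + \<delta>a) / (1 - \<delta>sa)) * (\<rho> powr (1 - q/2) * e + \<tau>) * n \<longrightarrow>
     r \<le> \<rho> powr (1 - q/2) * e + \<tau> \<longrightarrow>
     n powr (2/q) \<le> e powr (2/q) + r powr (2/q) \<longrightarrow> n \<le> C * \<tau>)"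
    for \<delta>a \<delta>sa \<rho> q \<kappa> :: real and C :: real
  define Cq where "Cq \<delta>a \<delta>sa \<rho> q \<kappa> = (SOME C. P \<delta>a \<delta>sa \<rho> q \<kappa> C)" for \<delta>a \<delta>sa \<rho> q \<kappa> :: real
  define C1 where "C1 \<delta>a \<delta>sa \<rho> q L \<kappa> =
     \<bar>sqrt (1 / L) * (2 * Cq \<delta>a \<delta>sa \<rho> q \<kappa>) powr (1 / q) * \<rho> powr (1 / q - 1 / 2)\<bar> + 1"
    for \<delta>a \<delta>sa \<rho> q L \<kappa> :: real
  have pos: "\<forall>x1 x2 x3 x4 x5 x6. 0 < C1 x1 x2 x3 x4 x5 x6"
    unfolding C1_def by (simp add: add_nonneg_pos)
  have inst: "\<forall>(m::nat) (n::nat) (d::nat) (A::real mat) (D::real mat) (L::real) (U::real)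
        (q::real) (s::nat) (a::nat) (f::real vec) (fhat::real vec) (fs::real vec).
      A \<in> carrier_mat m n \<longrightarrow> D \<in> carrier_mat n d \<longrightarrow>
      is_frame D L U \<longrightarrow>
      0 < q \<longrightarrow> q \<le> 1 \<longrightarrow> 0 < s \<longrightarrow> s < a \<longrightarrow>
      (\<exists>\<delta>. has_rip (dagger D) q A a \<delta>) \<longrightarrow>
      (\<exists>\<delta>. has_rip (dagger D) q A (s + a) \<delta>) \<longrightarrow>
      (let \<rho> = real s / real a; \<kappa> = U / L;
           \<delta>a = rip_const (dagger D) q A a; \<delta>sa = rip_const (dagger D) q A (s + a)
       in \<rho> powr (1 - q / 2) * (\<rho> powr (2 / q - 1) + 1) powr (q / 2) * \<kappa> powr q * (1 + \<delta>a)
            < 1 - \<delta>sa \<longrightarrow>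
          f \<in> carrier_vec n \<longrightarrow>
          is_lq_minimizer q A D (A *\<^sub>v f) fhat \<longrightarrow>
          is_best_s_term (D\<^sup>T *\<^sub>v f) s fs \<longrightarrow>
          l2_norm (fhat - f) \<le> C1 \<delta>a \<delta>sa \<rho> q L \<kappa> *
            lq_norm q (D\<^sup>T *\<^sub>v f - fs) / real s powr (1 / q - 1 / 2))"
  proof (intro allI impI)
    fix m n d :: nat and A D :: "real mat" and L U q :: real and s a :: nat and f fhat fs :: "real vec"
    assume A: "A \<in> carrier_mat m n" and D: "D \<in> carrier_mat n d" and fr: "is_frame D L U"
      and q: "0 < q" "q \<le> 1" and s: "0 < s" and sa: "s < a"
      and exa: "\<exists>\<delta>. has_rip (dagger D) q A a \<delta>" and exsa: "\<exists>\<delta>. has_rip (dagger D) q A (s + a) \<delta>"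
    define \<rho> where "\<rho> = real s / real a"
    define \<kappa> where "\<kappa> = U / L"
    define \<delta>a where "\<delta>a = rip_const (dagger D) q A a"
    define \<delta>sa where "\<delta>sa = rip_const (dagger D) q A (s + a)"
    show "let \<rho> = real s / real a; \<kappa> = U / L;
           \<delta>a = rip_const (dagger D) q A a; \<delta>sa = rip_const (dagger D) q A (s + a)
       in \<rho> powr (1 - q / 2) * (\<rho> powr (2 / q - 1) + 1) powr (q / 2) * \<kappa> powr q * (1 + \<delta>a)
            < 1 - \<delta>sa \<longrightarrow>
          f \<in> carrier_vec n \<longrightarrow>
          is_lq_minimizer q A D (A *\<^sub>v f) fhat \<longrightarrow>
          is_best_s_term (D\<^sup>T *\<^sub>v f) s fs \<longrightarrow>
          l2_norm (fhat - f) \<le> C1 \<delta>a \<delta>sa \<rho> q L \<kappa> *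
            lq_norm q (D\<^sup>T *\<^sub>v f - fs) / real s powr (1 / q - 1 / 2)"
      unfolding Let_def \<rho>_def[symmetric] \<kappa>_def[symmetric] \<delta>a_def[symmetric] \<delta>sa_def[symmetric]
    proof (intro impI)
      assume cond: "\<rho> powr (1 - q / 2) * (\<rho> powr (2 / q - 1) + 1) powr (q / 2) * \<kappa> powr q * (1 + \<delta>a) < 1 - \<delta>sa"
        and f: "f \<in> carrier_vec n" and mn: "is_lq_minimizer q A D (A *\<^sub>v f) fhat"
        and bst: "is_best_s_term (D\<^sup>T *\<^sub>v f) s fs"
      have ripa: "has_rip (dagger D) q A a \<delta>a" unfolding \<delta>a_def by (rule rip_at_inf[OF exa])
      have ripsa: "has_rip (dagger D) q A (s + a) \<delta>sa" unfolding \<delta>sa_def by (rule rip_at_inf[OF exsa])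
      have da: "0 \<le> \<delta>a" "\<delta>a < 1" using ripa unfolding has_rip_def by auto
      have dsa: "0 \<le> \<delta>sa" "\<delta>sa < 1" using ripsa unfolding has_rip_def by auto
      have L0: "0 < L" and LU: "L \<le> U" using fr unfolding is_frame_def by auto
      have k1: "1 \<le> \<kappa>" unfolding \<kappa>_def using L0 LU by simp
      have a0: "0 < real a" using s sa by simp
      have rho0: "0 < \<rho>" unfolding \<rho>_def using s a0 by simp
      define \<theta> where "\<theta> = \<kappa> powr (q/2) * (1 + \<delta>a) / (1 - \<delta>sa)"
      define \<rho>' where "\<rho>' = \<rho> powr (1 - q/2)"
      have th0: "0 < \<theta>" unfolding \<theta>_def using da dsa k1 by simp
      have rh0: "0 < \<rho>'" unfolding \<rho>'_def using rho0 by simp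
      have gam: "\<theta> * \<rho>' * (1 + \<rho>' powr (2/q)) powr (q/2) < 1"
      proof -
        have r2: "\<rho>' powr (2/q) = \<rho> powr (2/q - 1)"
          unfolding \<rho>'_def using rho0 q by (simp add: powr_powr algebra_simps)
        have kk: "\<kappa> powr (q/2) \<le> \<kappa> powr q" using k1 q by (intro powr_mono) auto
        define c where "c = (1 + \<rho> powr (2/q - 1)) powr (q/2)"
        have c0: "0 \<le> c" unfolding c_def by simp
        have dd: "0 < 1 - \<delta>sa" using dsa by simp
        have "\<theta> * \<rho>' * (1 + \<rho>' powr (2/q)) powr (q/2) = \<kappa> powr (q/2) * (1 + \<delta>a) * \<rho>' * c / (1 - \<delta>sa)"
          unfolding \<theta>_def c_def r2 by simp
        also have "\<dots> \<le> \<kappa> powr q * (1 + \<delta>a) * \<rho>' * c / (1 - \<delta>sa)"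
          using kk da rh0 c0 dd by (intro divide_right_mono mult_right_mono) auto
        also have "\<dots> < 1"
        proof -
          have num: "\<kappa> powr q * (1 + \<delta>a) * \<rho>' * c
              = \<rho> powr (1 - q / 2) * (\<rho> powr (2 / q - 1) + 1) powr (q / 2) * \<kappa> powr q * (1 + \<delta>a)"
            unfolding c_def \<rho>'_def by (simp only: add.commute[of 1] mult_ac)
          have cond': "\<kappa> powr q * (1 + \<delta>a) * \<rho>' * c < 1 - \<delta>sa" using cond by (simp only: num)
          have "\<kappa> powr q * (1 + \<delta>a) * \<rho>' * c < 1 * (1 - \<delta>sa)" using cond' by simp
          then show ?thesis using pos_divide_less_eq[OF dd] by blast
        qed
        finally show ?thesis .
      qed
      have PC: "P \<delta>a \<delta>sa \<rho> q \<kappa> (Cq \<delta>a \<delta>sa \<rho> q \<kappa>)"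
      proof -
        have "\<exists>C. P \<delta>a \<delta>sa \<rho> q \<kappa> C"
          using final_scalar[OF q th0 rh0 gam] unfolding P_def \<theta>_def \<rho>'_def by blast
        then show ?thesis unfolding Cq_def by (rule someI_ex)
      qed
      define C where "C = Cq \<delta>a \<delta>sa \<rho> q \<kappa>"
      define \<sigma> where "\<sigma> = lq_norm q (D\<^sup>T *\<^sub>v f - fs)"
      define \<tau> where "\<tau> = 2 * real a powr (q/2 - 1) * \<sigma> powr q"
      define N where "N = l2_norm (D\<^sup>T *\<^sub>v (fhat - f))"
      define nn where "nn = N powr q"
      obtain e r where er: "0 \<le> e" "0 \<le> r" "e^2 \<le> \<theta> * (\<rho>' * e + \<tau>) * nn" "r \<le> \<rho>' * e + \<tau>"
        "nn powr (2/q) \<le> e powr (2/q) + r powr (2/q)"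
        using core[OF A D fr q s sa ripa ripsa f mn bst]
        unfolding \<theta>_def \<rho>'_def \<tau>_def nn_def N_def \<sigma>_def \<kappa>_def \<rho>_def by blast
      have C0: "0 < C" using PC unfolding P_def C_def by simp
      have N0: "0 \<le> N" unfolding N_def by (rule l2_nonneg)
      have \<sigma>0: "0 \<le> \<sigma>" unfolding \<sigma>_def by (rule lq_nonneg)
      have tau0: "0 \<le> \<tau>" unfolding \<tau>_def by simp
      have nnC: "nn \<le> C * \<tau>"
        using PC er tau0 unfolding P_def C_def nn_def \<theta>_def \<rho>'_def by simp
      define Ps where "Ps = real s powr (1 / q - 1 / 2)"
      have Ps0: "0 < Ps" unfolding Ps_def using s by simp
      have NB: "N \<le> (2 * C) powr (1/q) * \<rho> powr (1/q - 1/2) * \<sigma> / Ps"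
      proof -
        have "N = nn powr (1/q)" unfolding nn_def using N0 q by (simp add: powr_powr)
        also have "\<dots> \<le> (C * \<tau>) powr (1/q)" using nnC q unfolding nn_def by (intro powr_mono2) auto
        also have "C * \<tau> = (2 * C) * real a powr (q/2 - 1) * \<sigma> powr q" unfolding \<tau>_def by simp
        also have "((2 * C) * real a powr (q/2 - 1) * \<sigma> powr q) powr (1/q)
            = (2 * C) powr (1/q) * real a powr (1/2 - 1/q) * \<sigma>"
        proof -
          have p1: "((2 * C) * real a powr (q/2 - 1) * \<sigma> powr q) powr (1/q)
             = (2 * C) powr (1/q) * (real a powr (q/2 - 1)) powr (1/q) * (\<sigma> powr q) powr (1/q)"
            using C0 by (simp add: powr_mult)
          have ex: "(q/2 - 1) * (1/q) = 1/2 - 1/q" using q by (simp add: field_simps)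
          have p2: "(real a powr (q/2 - 1)) powr (1/q) = real a powr (1/2 - 1/q)"
            by (simp only: powr_powr ex)
          have p3: "(\<sigma> powr q) powr (1/q) = \<sigma>" using \<sigma>0 q by (simp add: powr_powr)
          show ?thesis using p1 p2 p3 by simp
        qed
        also have "real a powr (1/2 - 1/q) = \<rho> powr (1/q - 1/2) / Ps"
        proof -
          have m: "- (1/2 - 1/q) = 1/q - 1/2" by simp
          have "real a powr (1/2 - 1/q) * real s powr (- (1/2 - 1/q)) = \<rho> powr (- (1/2 - 1/q))"
            by (rule a_powr_eq) (use a0 s \<rho>_def in auto)
          then have eq: "real a powr (1/2 - 1/q) * Ps = \<rho> powr (1/q - 1/2)" unfolding m Ps_def .
          have "real a powr (1/2 - 1/q) = (real a powr (1/2 - 1/q) * Ps) / Ps"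
            by (rule nonzero_mult_div_cancel_right[symmetric]) (use Ps0 in simp)
          also have "\<dots> = \<rho> powr (1/q - 1/2) / Ps" by (simp only: eq)
          finally show ?thesis .
        qed
        finally show ?thesis by simp
      qed
      have hN: "l2_norm (fhat - f) \<le> sqrt (1 / L) * N"
      proof -
        have fh: "fhat \<in> carrier_vec n" using mn A unfolding is_lq_minimizer_def by auto
        have hc: "fhat - f \<in> carrier_vec n" using fh f by auto
        have "L * (l2_norm (fhat - f))^2 \<le> N^2" unfolding N_def by (rule frame_lower[OF D fr hc])
        then have "(l2_norm (fhat - f))^2 \<le> (1 / L) * N^2" using L0 by (simp add: field_simps)
        then show ?thesis by (rule sqrt_bound[OF _ N0 l2_nonneg])
      qed
      define stuff where "stuff = sqrt (1 / L) * (2 * C) powr (1 / q) * \<rho> powr (1 / q - 1 / 2)"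
      have st0: "0 \<le> stuff" unfolding stuff_def using L0 by simp
      have "sqrt (1 / L) * N \<le> sqrt (1 / L) * ((2 * C) powr (1/q) * \<rho> powr (1/q - 1/2) * \<sigma> / Ps)"
        using NB L0 by (intro mult_left_mono) auto
      then have "l2_norm (fhat - f) \<le> sqrt (1 / L) * ((2 * C) powr (1/q) * \<rho> powr (1/q - 1/2) * \<sigma> / Ps)"
        using hN by linarith
      also have "\<dots> = stuff * \<sigma> / Ps" unfolding stuff_def by simp
      also have "\<dots> \<le> C1 \<delta>a \<delta>sa \<rho> q L \<kappa> * \<sigma> / Ps"
        unfolding C1_def C_def[symmetric] stuff_def[symmetric] using st0 \<sigma>0 Ps0
        by (intro divide_right_mono mult_right_mono) auto
      finally show "l2_norm (fhat - f) \<le> C1 \<delta>a \<delta>sa \<rho> q L \<kappa> *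
            lq_norm q (D\<^sup>T *\<^sub>v f - fs) / real s powr (1 / q - 1 / 2)"
        unfolding \<sigma>_def Ps_def .
    qed
  qed
  show ?thesis using pos inst by blast
qed


end
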